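(* Let $\gamma>1$, $\varphi_\rho(z)=z\log z$, $\varphi_e(z)=-\frac{1}{\gamma-1}\log z$ ($z>0$). In the discrete setting of the context, let positive $(\rho_K^n,e_K^n,p_K^n)$, positive face values $\rho_\sigma^{n+1},e_\sigma^{n+1}$ and normal velocities $u_{K,\sigma}^{n+1}$ satisfy, for all $K\in\mathcal M$, $0\le n\le N-1$, the implicit scheme \[ \frac{|K|}{\delta t}(\rho_K^{n+1}-\rho_K^n)+\sum_{\sigma\in\mathcal{E}(K)}F_{K,\sigma}^{n+1}=0, \] \[ \frac{|K|}{\delta t}(\rho_K^{n+1}e_K^{n+1}-\rho_K^ne_K^n)+\sum_{\sigma\in\mathcal{E}(K)}F_{K,\sigma}^{n+1}e_\sigma^{n+1}+p_K^{n+1}\sum_{\sigma\in\mathcal{E}(K)}|\sigma|\,u_{K,\sigma}^{n+1}\ge 0,\qquad p_K^{n+1}=(\gamma-1)\rho_K^{n+1}e_K^{n+1}, \] with $F_{K,\sigma}^{n+1}=|\sigma|\rho_\sigma^{n+1}u_{K,\sigma}^{n+1}$. For $\sigma=K|L\in\mathcal{E}_{\rm int}$ let $\rho_{KL}^{n+1}$ (resp. $e_{KL}^{n+1}$) be the number $x_{KL}$ associated with $\varphi=\varphi_\rho$, $x_K=\rho_K^{n+1}$, $x_L=\rho_L^{n+1}$ (resp. $\varphi=\varphi_e$, $x_K=e_K^{n+1}$, $x_L=e_L^{n+1}$). Assume that for all $\sigma=K|L\in\mathcal{E}_{\rm int}$ and $0\le n\le N-1$: $\rho_\sigma^{n+1}\in|\hspace{-0.12em}[\rho_K^{n+1},\rho_{KL}^{n+1}]\hspace{-0.12em}|$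 and $e_\sigma^{n+1}\in|\hspace{-0.12em}[e_K^{n+1},e_{KL}^{n+1}]\hspace{-0.12em}|$ if $u_{K,\sigma}^{n+1}\ge0$, and $\rho_\sigma^{n+1}\in|\hspace{-0.12em}[\rho_L^{n+1},\rho_{KL}^{n+1}]\hspace{-0.12em}|$, $e_\sigma^{n+1}\in|\hspace{-0.12em}[e_L^{n+1},e_{KL}^{n+1}]\hspace{-0.12em}|$ otherwise. Define, for $\sigma=K|L$, \[ (\delta\varphi_\rho)_\sigma^{n+1}=\varphi_\rho(\rho_K^{n+1})-\varphi_\rho(\rho_\sigma^{n+1})+\varphi_\rho'(\rho_K^{n+1})[\rho_{KL}^{n+1}-\rho_K^{n+1}]+\tfrac12[\varphi_\rho'(\rho_K^{n+1})+\varphi_\rho'(\rho_L^{n+1})][\rho_\sigma^{n+1}-\rho_{KL}^{n+1}], \] and $(\delta\varphi_e)_\sigma^{n+1}$ by the same formula with $\varphi_\rho,\rho$ replaced by $\varphi_e,e$ (both depend only on $\sigma$), and \[ |K|(\delta R_\eta)_K^{n+1}=\sum_{\sigma\in\mathcal{E}(K)\cap\mathcal{E}_{\rm int}}|\sigma|\,(\delta\varphi_\rho)_\sigma^{n+1}u_{K,\sigma}^{n+1}+\sum_{\sigma\in\mathcal{E}(K)\cap\mathcal{E}_{\rm int}}(\delta\varphi_e)_\sigma^{n+1}F_{K,\sigma}^{n+1}. \] Then for all $K\in\mathcal M$, $0\le n\le N-1$, \[ \frac{|K|}{\delta t}(\eta_K^{n+1}-\eta_K^n)+\sum_{\sigma\in\mathcal{E}(K)}|\sigma|\,\eta_\sigma^{n+1}u_{K,\sigma}^{n+1}+|K|(\delta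 R_\eta)_K^{n+1}\le0, \] where $\eta_K^m=\varphi_\rho(\rho_K^m)+\rho_K^m\varphi_e(e_K^m)$ and $\eta_\sigma^{n+1}=\varphi_\rho(\rho_\sigma^{n+1})+\rho_\sigma^{n+1}\varphi_e(e_\sigma^{n+1})$; the remainder $\delta R_\eta$ is conservative and, for $0\le n\le N-1$, \[ \sum_{K\in\mathcal M}|K|\,\eta_K^{n+1}\le\sum_{K\in\mathcal M}|K|\,\eta_K^n. \] Moreover, if $M>1$ is such that $\rho_K^n\le M$, $1/\rho_K^n\le M$, $e_K^n\le M$, $1/e_K^n\le M$ and $|u_{K,\sigma}^n|\le M$ for all $K$, $\sigma\in\mathcal E(K)$, $0\le n\le N$, and $|\varphi_\rho'|_\infty=\max(|\varphi_\rho'(1/M)|,|\varphi_\rho'(M)|)$, $|\varphi_e'|_\infty=\max(|\varphi_e'(1/M)|,|\varphi_e'(M)|)$, then \[ \|\delta R_\eta\|_{-1,1}\le 3M\bigl(|\varphi_\rho'|_\infty\|\rho\|_{x,BV}+M|\varphi_e'|_\infty\|e\|_{x,BV}\bigr)h_{\mathcal M}. \]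
   Context: Setting: $\Omega\subset\mathbb{R}^d$ bounded; $\mathcal{M}$ a regular polytopal mesh of $\Omega$ with faces $\mathcal{E}$, faces of $K$ denoted $\mathcal{E}(K)$, interior faces $\mathcal{E}_{\rm int}$, boundary faces $\mathcal{E}_{\rm ext}$; $\sigma=K|L$ denotes the interior face between $K$ and $L$; $|K|$, $|\sigma|$ are the measures; ${\boldsymbol x}_K$ is the mass center of $K$; $h_{\mathcal M}=\max_K{\rm diam}(K)$. Uniform time grid $t_n=n\,\delta t$, $0\le n\le N$, $t_N=T$. Normal velocities satisfy $u_{L,\sigma}^n=-u_{K,\sigma}^n$ for $\sigma=K|L$ and $u_{K,\sigma}^n=0$ for $\sigma\in\mathcal{E}_{\rm ext}$ (so boundary face terms vanish); face values depend only on the face. $|\hspace{-0.12em}[a,b]\hspace{-0.12em}|=[\min(a,b),\max(a,b)]$. The number $x_{KL}$: for a strictly convex $C^1$ function $\varphi$ and $x_K,x_L$ in its domain, $x_{KL}$ is the unique number in $|\hspace{-0.12em}[x_K,x_L]\hspace{-0.12em}|$ with $\varphi(x_K)+\varphi'(x_K)(x_{KL}-x_K)=\varphi(x_L)+\varphi'(x_L)(x_{KL}-x_L)$ if $x_K\ne x_L$, and $x_{KL}=x_K$ otherwise. Norms: $\|z\|_{x,BV}=\sum_n\delta t\sum_{\sigma=K|L\in\mathcal{E}_{\rm int}}|\sigma||z_L^n-z_K^n|$; $\|z\|_{-1,1}=\sup_{\psi}\bigl(\sup_{{\boldsymbol x},t}|\nabla\psi({\boldsymbol x},t)|\bigr)^{-1}\sum_n\delta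 t\sum_K|K|z_K^n\psi({\boldsymbol x}_K,t_n)$, supremum over $\psi\in C^\infty_c([0,T)\times\bar\Omega)$ with nonzero gradient, sums over $n$ over the indices where $z$ is defined. *)

theory Defs
  imports "HOL-Analysis.Analysis"
begin

definition polytopal_mesh ::
  "'a::euclidean_space set \<Rightarrow> 'a set set \<Rightarrow> 'a set set \<Rightarrow> ('a set \<Rightarrow> 'a set set) \<Rightarrow> bool" where
  "polytopal_mesh \<Omega> M E EK \<longleftrightarrow>
     bounded \<Omega> \<and> open \<Omega> \<and> finite M \<and> M \<noteq> {} \<and>
     (\<forall>K\<in>M. (\<exists>P. polytope P \<and> K = interior P) \<and> K \<noteq> {} \<and> K \<subseteq> \<Omega>) \<and>
     pairwise disjnt M \<and> closure \<Omega> = \<Union> (closure ` M) \<and>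
     E = \<Union> (EK ` M) \<and> finite E \<and>
     (\<forall>K\<in>M. finite (EK K) \<and> frontier K = \<Union> (EK K)) \<and>
     (\<forall>K\<in>M. \<forall>\<sigma>\<in>EK K. \<sigma> \<subseteq> frontier K \<and> convex \<sigma> \<and> closed \<sigma> \<and>
        aff_dim \<sigma> = int DIM('a) - 1) \<and>
     (\<forall>\<sigma>\<in>E. card {K\<in>M. \<sigma> \<in> EK K} \<le> 2) \<and>
     (\<forall>\<sigma>\<in>E. card {K\<in>M. \<sigma> \<in> EK K} = 1 \<longrightarrow> \<sigma> \<subseteq> frontier \<Omega>)"

definition int_faces :: "'a set set \<Rightarrow> ('a set \<Rightarrow> 'a set set) \<Rightarrow> 'a set set \<Rightarrow> 'a set set" where
  "int_faces M EK E = {\<sigma>\<in>E. card {K\<in>M. \<sigma> \<in> EK K} = 2}"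

definition ext_faces :: "'a set set \<Rightarrow> ('a set \<Rightarrow> 'a set set) \<Rightarrow> 'a set set \<Rightarrow> 'a set set" where
  "ext_faces M EK E = E - int_faces M EK E"

definition nb :: "'a set set \<Rightarrow> ('a set \<Rightarrow> 'a set set) \<Rightarrow> 'a set \<Rightarrow> 'a set \<Rightarrow> 'a set" where
  "nb M EK K \<sigma> = (THE L. L \<in> M \<and> L \<noteq> K \<and> \<sigma> \<in> EK L)"

text \<open>Some cell K having sigma as a face (so that sigma = K|(nb K sigma) for interior faces).\<close>
definition some_cell :: "'a set set \<Rightarrow> ('a set \<Rightarrow> 'a set set) \<Rightarrow> 'a set \<Rightarrow> 'a set" where
  "some_cell M EK \<sigma> = (SOME K. K \<in> M \<and> \<sigma> \<in> EK K)"

definition mass_center :: "'a::euclidean_space set \<Rightarrow> 'a" where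
  "mass_center K = (1 / measure lebesgue K) *\<^sub>R integral K (\<lambda>x. x)"

definition mesh_size :: "'a::euclidean_space set set \<Rightarrow> real" where
  "mesh_size M = Max (diameter ` M)"

definition phi_rho :: "real \<Rightarrow> real" where
  "phi_rho z = z * ln z"

definition phi_e :: "real \<Rightarrow> real \<Rightarrow> real" where
  "phi_e \<gamma> z = - (1 / (\<gamma> - 1)) * ln z"

definition eta :: "real \<Rightarrow> real \<Rightarrow> real \<Rightarrow> real" where
  "eta \<gamma> r e = phi_rho r + r * phi_e \<gamma> e"

definition between :: "real \<Rightarrow> real \<Rightarrow> real \<Rightarrow> bool" where
  "between x a b \<longleftrightarrow> min a b \<le> x \<and> x \<le> max a b"

definition xKL :: "(real \<Rightarrow> real) \<Rightarrow> real \<Rightarrow> real \<Rightarrow> real" where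
  "xKL \<phi> a b = (if a = b then a else
     (THE x. between x a b \<and> \<phi> a + deriv \<phi> a * (x - a) = \<phi> b + deriv \<phi> b * (x - b)))"

definition dphi :: "(real \<Rightarrow> real) \<Rightarrow> real \<Rightarrow> real \<Rightarrow> real \<Rightarrow> real" where
  "dphi \<phi> a b s = \<phi> a - \<phi> s + deriv \<phi> a * (xKL \<phi> a b - a)
      + 1/2 * (deriv \<phi> a + deriv \<phi> b) * (s - xKL \<phi> a b)"

definition dR_flux ::
  "real \<Rightarrow> 'a set set \<Rightarrow> ('a set \<Rightarrow> 'a set set) \<Rightarrow> ('a set \<Rightarrow> real) \<Rightarrow>
   (nat \<Rightarrow> 'a set \<Rightarrow> real) \<Rightarrow> (nat \<Rightarrow> 'a set \<Rightarrow> real) \<Rightarrow>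
   (nat \<Rightarrow> 'a set \<Rightarrow> real) \<Rightarrow> (nat \<Rightarrow> 'a set \<Rightarrow> real) \<Rightarrow>
   (nat \<Rightarrow> 'a set \<Rightarrow> 'a set \<Rightarrow> real) \<Rightarrow> nat \<Rightarrow> 'a set \<Rightarrow> 'a set \<Rightarrow> real" where
  "dR_flux \<gamma> M EK area rho rhof e ef u n K \<sigma> =
     (let L = nb M EK K \<sigma> in
       area \<sigma> * dphi phi_rho (rho n K) (rho n L) (rhof n \<sigma>) * u n K \<sigma>
       + dphi (phi_e \<gamma>) (e n K) (e n L) (ef n \<sigma>) * (area \<sigma> * rhof n \<sigma> * u n K \<sigma>))"

definition dR ::
  "real \<Rightarrow> 'a::euclidean_space set set \<Rightarrow> 'a set set \<Rightarrow> ('a set \<Rightarrow> 'a set set) \<Rightarrow> ('a set \<Rightarrow> real) \<Rightarrow>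
   (nat \<Rightarrow> 'a set \<Rightarrow> real) \<Rightarrow> (nat \<Rightarrow> 'a set \<Rightarrow> real) \<Rightarrow>
   (nat \<Rightarrow> 'a set \<Rightarrow> real) \<Rightarrow> (nat \<Rightarrow> 'a set \<Rightarrow> real) \<Rightarrow>
   (nat \<Rightarrow> 'a set \<Rightarrow> 'a set \<Rightarrow> real) \<Rightarrow> nat \<Rightarrow> 'a set \<Rightarrow> real" where
  "dR \<gamma> M E EK area rho rhof e ef u n K =
     (1 / measure lebesgue K) *
       (\<Sum>\<sigma>\<in>EK K \<inter> int_faces M EK E. dR_flux \<gamma> M EK area rho rhof e ef u n K \<sigma>)"

fun iter_dd :: "'a::real_normed_vector list \<Rightarrow> ('a \<Rightarrow> real) \<Rightarrow> 'a \<Rightarrow> real" where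
  "iter_dd [] f = f"
| "iter_dd (v # vs) f = (\<lambda>x. frechet_derivative (iter_dd vs f) (at x) v)"

definition smooth_fun :: "('a::real_normed_vector \<Rightarrow> real) \<Rightarrow> bool" where
  "smooth_fun f \<longleftrightarrow> (\<forall>vs x. iter_dd vs f differentiable (at x))"

text \<open>Test functions in C_c^infinity([0,T) x closure Omega), written psi(x,t).\<close>
definition test_fun :: "'a::euclidean_space set \<Rightarrow> real \<Rightarrow> ('a \<times> real \<Rightarrow> real) \<Rightarrow> bool" where
  "test_fun \<Omega> T \<psi> \<longleftrightarrow> smooth_fun \<psi> \<and> (\<exists>T'<T. \<forall>x t. T' \<le> t \<longrightarrow> \<psi> (x, t) = 0)"

definition grad_sup :: "'a::euclidean_space set \<Rightarrow> real \<Rightarrow> ('a \<times> real \<Rightarrow> real) \<Rightarrow> real" where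
  "grad_sup \<Omega> T \<psi> = Sup {onorm (frechet_derivative (\<lambda>y. \<psi> (y, t)) (at x)) | x t.
      x \<in> closure \<Omega> \<and> 0 \<le> t \<and> t < T}"

text \<open>The discrete W^{-1,1}-type norm of z = (z_K^n), n ranging over the index set I.\<close>
definition neg_norm ::
  "'a::euclidean_space set \<Rightarrow> 'a set set \<Rightarrow> real \<Rightarrow> real \<Rightarrow> nat set \<Rightarrow> (nat \<Rightarrow> 'a set \<Rightarrow> real) \<Rightarrow> ereal" where
  "neg_norm \<Omega> M T dt I z =
     (SUP \<psi> \<in> {\<psi>. test_fun \<Omega> T \<psi> \<and> grad_sup \<Omega> T \<psi> \<noteq> 0}.
        ereal ((1 / grad_sup \<Omega> T \<psi>) *
          (\<Sum>n\<in>I. dt * (\<Sum>K\<in>M. measure lebesgue K * z n K * \<psi> (mass_center K, real n * dt)))))"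

text \<open>Discrete space BV seminorm, each interior face sigma = K|L counted once.\<close>
definition bv_norm ::
  "'a set set \<Rightarrow> 'a set set \<Rightarrow> ('a set \<Rightarrow> 'a set set) \<Rightarrow> ('a set \<Rightarrow> real) \<Rightarrow> real \<Rightarrow> nat set \<Rightarrow>
   (nat \<Rightarrow> 'a set \<Rightarrow> real) \<Rightarrow> real" where
  "bv_norm M E EK area dt I z =
     (\<Sum>n\<in>I. dt * (\<Sum>\<sigma>\<in>int_faces M EK E.
        area \<sigma> * \<bar>z n (nb M EK (some_cell M EK \<sigma>) \<sigma>) - z n (some_cell M EK \<sigma>)\<bar>))"

end

theory Submission
  imports Defs
begin


lemma mesh_D:
  fixes \<Omega> :: "'a::euclidean_space set"
  assumes "polytopal_mesh \<Omega> M E EK"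
  shows "bounded \<Omega>" "finite M" 
    "\<forall>K\<in>M. (\<exists>P. polytope P \<and> K = interior P) \<and> K \<noteq> {} \<and> K \<subseteq> \<Omega>"
    "E = \<Union> (EK ` M)" "finite E"
    "\<forall>K\<in>M. finite (EK K) \<and> frontier K = \<Union> (EK K)"
    "\<forall>K\<in>M. \<forall>\<sigma>\<in>EK K. \<sigma> \<subseteq> frontier K \<and> convex \<sigma> \<and> closed \<sigma> \<and> aff_dim \<sigma> = int DIM('a) - 1"
    "\<forall>\<sigma>\<in>E. card {K\<in>M. \<sigma> \<in> EK K} \<le> 2"
  using assms unfolding polytopal_mesh_def apply - by (elim conjE; assumption)+

lemma cell_basic:
  fixes \<Omega> :: "'a::euclidean_space set"
  assumes mesh: "polytopal_mesh \<Omega> M E EK" and K: "K \<in> M"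
  shows "open K" "bounded K" "convex K" "K \<noteq> {}" "K \<subseteq> \<Omega>" "K \<in> lmeasurable"
    "measure lebesgue K > 0"
proof -
  have h: "(\<exists>P. polytope P \<and> K = interior P) \<and> K \<noteq> {} \<and> K \<subseteq> \<Omega>"
    using bspec[OF mesh_D(3)[OF mesh] K] .
  then obtain P where P: "polytope P" "K = interior P" by blast
  have ne: "K \<noteq> {}" and sub: "K \<subseteq> \<Omega>" using h by auto
  show "open K" using P by simp
  show bK: "bounded K" using P polytope_imp_bounded bounded_interior by blast
  show "convex K" using P polytope_imp_convex convex_interior by blast
  show "K \<noteq> {}" "K \<subseteq> \<Omega>" using ne sub by auto
  show lm: "K \<in> lmeasurable" using bK \<open>open K\<close> lmeasurable_open by blast
  obtain x where x: "x \<in> K" using ne by blast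
  then obtain r where r: "r > 0" "ball x r \<subseteq> K" using \<open>open K\<close> open_contains_ball by blast
  have "measure lborel (ball x r) > 0" using content_ball_pos[OF r(1)] .
  moreover have "measure lebesgue (ball x r) = measure lborel (ball x r)"
    by (simp add: measure_completion)
  moreover have "measure lebesgue (ball x r) \<le> measure lebesgue K"
    using measure_mono_fmeasurable[OF r(2) fmeasurableD[OF lmeasurable_ball] lm] .
  ultimately show "measure lebesgue K > 0" by linarith
qed

lemma face_basic:
  fixes \<Omega> :: "'a::euclidean_space set"
  assumes mesh: "polytopal_mesh \<Omega> M E EK" and K: "K \<in> M" and s: "\<sigma> \<in> EK K"
  shows "\<sigma> \<noteq> {}" "\<sigma> \<subseteq> closure K" "\<sigma> \<in> E"
proof -
  have a: "aff_dim \<sigma> = int DIM('a) - 1" "\<sigma> \<subseteq> frontier K" using mesh_D(7)[OF mesh] K s by auto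
  have "DIM('a) \<ge> 1" using DIM_positive by (simp add: Suc_le_eq)
  then show "\<sigma> \<noteq> {}" using a by auto
  show "\<sigma> \<subseteq> closure K" using a frontier_def by auto
  show "\<sigma> \<in> E" using mesh_D(4)[OF mesh] K s by auto
qed

lemma two_cells:
  fixes \<Omega> :: "'a::euclidean_space set"
  assumes mesh: "polytopal_mesh \<Omega> M E EK" and K: "K \<in> M" and L: "L \<in> M" and KL: "K \<noteq> L"
    and sK: "\<sigma> \<in> EK K" and sL: "\<sigma> \<in> EK L"
  shows "{K'\<in>M. \<sigma> \<in> EK K'} = {K, L}" "nb M EK K \<sigma> = L" "\<sigma> \<in> int_faces M EK E"
proof -
  have sE: "\<sigma> \<in> E" using face_basic[OF mesh K sK] by auto
  have fin: "finite {K'\<in>M. \<sigma> \<in> EK K'}" using mesh_D(2)[OF mesh] by auto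
  have c2: "card {K'\<in>M. \<sigma> \<in> EK K'} \<le> 2" using mesh_D(8)[OF mesh] sE by auto
  have sub: "{K, L} \<subseteq> {K'\<in>M. \<sigma> \<in> EK K'}" using K L sK sL by auto
  have cKL: "card {K, L} = 2" using KL by auto
  show eq: "{K'\<in>M. \<sigma> \<in> EK K'} = {K, L}"
  proof -
    have "card {K, L} = card {K'\<in>M. \<sigma> \<in> EK K'}" using c2 cKL card_mono[OF fin sub] by linarith
    then show ?thesis using card_subset_eq[OF fin sub] by simp
  qed
  show "nb M EK K \<sigma> = L" unfolding nb_def
  proof (rule the_equality)
    show "L \<in> M \<and> L \<noteq> K \<and> \<sigma> \<in> EK L" using L KL sL by auto
    fix L' assume "L' \<in> M \<and> L' \<noteq> K \<and> \<sigma> \<in> EK L'"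
    then have "L' \<in> {K'\<in>M. \<sigma> \<in> EK K'}" "L' \<noteq> K" by auto
    then show "L' = L" using eq by auto
  qed
  show "\<sigma> \<in> int_faces M EK E" unfolding int_faces_def using sE eq cKL by auto
qed

lemma int_face_cells:
  fixes \<Omega> :: "'a::euclidean_space set"
  assumes mesh: "polytopal_mesh \<Omega> M E EK" and s: "\<sigma> \<in> int_faces M EK E"
  shows "some_cell M EK \<sigma> \<in> M" "\<sigma> \<in> EK (some_cell M EK \<sigma>)"
    "nb M EK (some_cell M EK \<sigma>) \<sigma> \<in> M" "nb M EK (some_cell M EK \<sigma>) \<sigma> \<noteq> some_cell M EK \<sigma>"
    "\<sigma> \<in> EK (nb M EK (some_cell M EK \<sigma>) \<sigma>)"
proof -
  have "card {K\<in>M. \<sigma> \<in> EK K} = 2" using s unfolding int_faces_def by auto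
  then obtain a b where ab: "{K\<in>M. \<sigma> \<in> EK K} = {a, b}" "a \<noteq> b" by (meson card_2_iff)
  have ex: "\<exists>K. K \<in> M \<and> \<sigma> \<in> EK K" using ab by blast
  define K where "K = some_cell M EK \<sigma>"
  have K: "K \<in> M \<and> \<sigma> \<in> EK K" unfolding K_def some_cell_def using someI_ex[OF ex] .
  obtain L where L0: "L \<in> {a,b}" "L \<noteq> K" using ab(2) by blast
  then have "L \<in> {K\<in>M. \<sigma> \<in> EK K}" using ab(1) by simp
  then have L: "L \<in> M" "\<sigma> \<in> EK L" "L \<noteq> K" using L0 by auto
  have "nb M EK K \<sigma> = L" using two_cells[OF mesh _ L(1) _ _ L(2)] K L(3) by auto
  then show "some_cell M EK \<sigma> \<in> M" "\<sigma> \<in> EK (some_cell M EK \<sigma>)"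
    "nb M EK (some_cell M EK \<sigma>) \<sigma> \<in> M" "nb M EK (some_cell M EK \<sigma>) \<sigma> \<noteq> some_cell M EK \<sigma>"
    "\<sigma> \<in> EK (nb M EK (some_cell M EK \<sigma>) \<sigma>)" using K L unfolding K_def by auto
qed


lemma int_faces_sub: "int_faces M EK E \<subseteq> E" unfolding int_faces_def by auto

lemma rearrange:
  fixes \<Omega> :: "'a::euclidean_space set" and h :: "'a set \<Rightarrow> 'a set \<Rightarrow> real"
  assumes mesh: "polytopal_mesh \<Omega> M E EK"
  shows "(\<Sum>K\<in>M. \<Sum>\<sigma>\<in>EK K \<inter> int_faces M EK E. h K \<sigma>)
       = (\<Sum>\<sigma>\<in>int_faces M EK E. h (some_cell M EK \<sigma>) \<sigma> + h (nb M EK (some_cell M EK \<sigma>) \<sigma>) \<sigma>)"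
proof -
  let ?I = "int_faces M EK E"
  have fM: "finite M" using mesh_D(2)[OF mesh] .
  have fI: "finite ?I" using finite_subset[OF int_faces_sub mesh_D(5)[OF mesh]] .
  have "(\<Sum>K\<in>M. \<Sum>\<sigma>\<in>EK K \<inter> ?I. h K \<sigma>) = (\<Sum>K\<in>M. \<Sum>\<sigma>\<in>{\<sigma>\<in>?I. \<sigma> \<in> EK K}. h K \<sigma>)"
  proof (rule sum.cong[OF refl])
    fix K
    have "EK K \<inter> ?I = {\<sigma>\<in>?I. \<sigma> \<in> EK K}" by blast
    then show "(\<Sum>\<sigma>\<in>EK K \<inter> ?I. h K \<sigma>) = (\<Sum>\<sigma>\<in>{\<sigma>\<in>?I. \<sigma> \<in> EK K}. h K \<sigma>)" by simp
  qed
  also have "\<dots> = (\<Sum>\<sigma>\<in>?I. \<Sum>K | K \<in> M \<and> \<sigma> \<in> EK K. h K \<sigma>)"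
    by (rule sum.swap_restrict[OF fM fI])
  also have "\<dots> = (\<Sum>\<sigma>\<in>?I. h (some_cell M EK \<sigma>) \<sigma> + h (nb M EK (some_cell M EK \<sigma>) \<sigma>) \<sigma>)"
  proof (rule sum.cong[OF refl])
    fix \<sigma> assume s: "\<sigma> \<in> ?I"
    note c = int_face_cells[OF mesh s]
    have "{K. K \<in> M \<and> \<sigma> \<in> EK K} = {some_cell M EK \<sigma>, nb M EK (some_cell M EK \<sigma>) \<sigma>}"
      using two_cells(1)[OF mesh c(1) c(3) c(4)[symmetric] c(2) c(5)] by simp
    then show "(\<Sum>K | K \<in> M \<and> \<sigma> \<in> EK K. h K \<sigma>) = h (some_cell M EK \<sigma>) \<sigma> + h (nb M EK (some_cell M EK \<sigma>) \<sigma>) \<sigma>"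
      using c(4) by simp
  qed
  finally show ?thesis .
qed

lemma cancel_int:
  fixes \<Omega> :: "'a::euclidean_space set" and h :: "'a set \<Rightarrow> 'a set \<Rightarrow> real"
  assumes mesh: "polytopal_mesh \<Omega> M E EK"
    and anti: "\<And>K L \<sigma>. K \<in> M \<Longrightarrow> L \<in> M \<Longrightarrow> K \<noteq> L \<Longrightarrow> \<sigma> \<in> EK K \<Longrightarrow> \<sigma> \<in> EK L \<Longrightarrow> h L \<sigma> = - h K \<sigma>"
  shows "(\<Sum>K\<in>M. \<Sum>\<sigma>\<in>EK K \<inter> int_faces M EK E. h K \<sigma>) = 0"
proof -
  have "(\<Sum>K\<in>M. \<Sum>\<sigma>\<in>EK K \<inter> int_faces M EK E. h K \<sigma>)
       = (\<Sum>\<sigma>\<in>int_faces M EK E. h (some_cell M EK \<sigma>) \<sigma> + h (nb M EK (some_cell M EK \<sigma>) \<sigma>) \<sigma>)"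
    by (rule rearrange[OF mesh])
  also have "\<dots> = 0"
  proof (rule sum.neutral, rule ballI)
    fix \<sigma> assume s: "\<sigma> \<in> int_faces M EK E"
    note c = int_face_cells[OF mesh s]
    show "h (some_cell M EK \<sigma>) \<sigma> + h (nb M EK (some_cell M EK \<sigma>) \<sigma>) \<sigma> = 0"
      using anti[OF c(1) c(3) c(4)[symmetric] c(2) c(5)] by simp
  qed
  finally show ?thesis .
qed

lemma cancel_all:
  fixes \<Omega> :: "'a::euclidean_space set" and h :: "'a set \<Rightarrow> 'a set \<Rightarrow> real"
  assumes mesh: "polytopal_mesh \<Omega> M E EK"
    and anti: "\<And>K L \<sigma>. K \<in> M \<Longrightarrow> L \<in> M \<Longrightarrow> K \<noteq> L \<Longrightarrow> \<sigma> \<in> EK K \<Longrightarrow> \<sigma> \<in> EK L \<Longrightarrow> h L \<sigma> = - h K \<sigma>"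
    and ext: "\<And>K \<sigma>. K \<in> M \<Longrightarrow> \<sigma> \<in> EK K \<Longrightarrow> \<sigma> \<notin> int_faces M EK E \<Longrightarrow> h K \<sigma> = 0"
  shows "(\<Sum>K\<in>M. \<Sum>\<sigma>\<in>EK K. h K \<sigma>) = 0"
proof -
  have "(\<Sum>K\<in>M. \<Sum>\<sigma>\<in>EK K. h K \<sigma>) = (\<Sum>K\<in>M. \<Sum>\<sigma>\<in>EK K \<inter> int_faces M EK E. h K \<sigma>)"
  proof (rule sum.cong[OF refl])
    fix K assume K: "K \<in> M"
    have f: "finite (EK K)" using mesh_D(6)[OF mesh] K by auto
    show "(\<Sum>\<sigma>\<in>EK K. h K \<sigma>) = (\<Sum>\<sigma>\<in>EK K \<inter> int_faces M EK E. h K \<sigma>)"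
      by (rule sum.mono_neutral_right[OF f]) (auto intro: ext[OF K])
  qed
  also have "\<dots> = 0" by (rule cancel_int[OF mesh anti])
  finally show ?thesis .
qed


lemma int_face_other:
  fixes \<Omega> :: "'a::euclidean_space set"
  assumes mesh: "polytopal_mesh \<Omega> M E EK" and K: "K \<in> M" and sK: "\<sigma> \<in> EK K" and sI: "\<sigma> \<in> int_faces M EK E"
  shows "nb M EK K \<sigma> \<in> M \<and> nb M EK K \<sigma> \<noteq> K \<and> \<sigma> \<in> EK (nb M EK K \<sigma>)"
proof -
  note c = int_face_cells[OF mesh sI]
  have eq: "{K'\<in>M. \<sigma> \<in> EK K'} = {some_cell M EK \<sigma>, nb M EK (some_cell M EK \<sigma>) \<sigma>}"
    using two_cells(1)[OF mesh c(1) c(3) c(4)[symmetric] c(2) c(5)] .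
  have "K \<in> {K'\<in>M. \<sigma> \<in> EK K'}" using K sK by simp
  then have "K = some_cell M EK \<sigma> \<or> K = nb M EK (some_cell M EK \<sigma>) \<sigma>" unfolding eq by simp
  then show ?thesis
  proof
    assume "K = some_cell M EK \<sigma>" then show ?thesis using c by simp
  next
    assume h: "K = nb M EK (some_cell M EK \<sigma>) \<sigma>"
    have "nb M EK K \<sigma> = some_cell M EK \<sigma>"
      using two_cells(2)[OF mesh c(3) c(1) c(4) c(5) c(2)] h by simp
    then show ?thesis using c h by simp
  qed
qed


lemma mesh_ne:
  fixes \<Omega> :: "'a::euclidean_space set"
  assumes mesh: "polytopal_mesh \<Omega> M E EK"
  shows "M \<noteq> {}" "\<Omega> \<noteq> {}" "bounded \<Omega>"
proof -
  show M: "M \<noteq> {}" using mesh unfolding polytopal_mesh_def by (elim conjE)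
  then obtain K where K: "K \<in> M" by blast
  show "\<Omega> \<noteq> {}" using cell_basic(4,5)[OF mesh K] by blast
  show "bounded \<Omega>" using mesh_D(1)[OF mesh] .
qed

lemma cell_dist:
  fixes \<Omega> :: "'a::euclidean_space set"
  assumes mesh: "polytopal_mesh \<Omega> M E EK" and K: "K \<in> M" and x: "x \<in> closure K" and y: "y \<in> closure K"
  shows "norm (x - y) \<le> mesh_size M"
proof -
  have b: "bounded (closure K)" using bounded_closure[OF cell_basic(2)[OF mesh K]] .
  have "dist x y \<le> diameter (closure K)" by (rule diameter_bounded_bound[OF b x y])
  also have "\<dots> = diameter K" by (rule diameter_closure) (rule cell_basic(2)[OF mesh K])
  also have "\<dots> \<le> Max (diameter ` M)" using mesh_D(2)[OF mesh] K by (intro Max_ge) auto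
  finally show ?thesis unfolding mesh_size_def by (simp add: dist_norm)
qed

lemma mesh_size_nonneg:
  fixes \<Omega> :: "'a::euclidean_space set"
  assumes mesh: "polytopal_mesh \<Omega> M E EK"
  shows "0 \<le> mesh_size M"
proof -
  obtain K where K: "K \<in> M" using mesh_ne(1)[OF mesh] by blast
  obtain x where x: "x \<in> K" using cell_basic(4)[OF mesh K] by blast
  have "norm (x - x) \<le> mesh_size M" using cell_dist[OF mesh K] x closure_subset by blast
  then show ?thesis by simp
qed



lemma centroid_in_closure:
  fixes K :: "'a::euclidean_space set"
  assumes bK: "bounded K" and cK: "convex K" and lm: "K \<in> lmeasurable" and pos: "measure lebesgue K > 0"
  shows "mass_center K \<in> closure K"
proof (rule ccontr)
  assume nc: "mass_center K \<notin> closure K"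
  obtain a b where ab: "a \<bullet> mass_center K < b" "\<forall>x\<in>closure K. b < a \<bullet> x"
    using separating_hyperplane_closed_point[OF convex_closure[OF cK] closed_closure nc] by blast
  obtain B where B: "B > 0" "\<forall>x\<in>K. norm x \<le> B" using bK bounded_pos by blast
  have intid: "(\<lambda>x. x) integrable_on K"
  proof (rule measurable_bounded_by_integrable_imp_integrable[where g = "\<lambda>x. B"])
    show "(\<lambda>x. x) \<in> borel_measurable (lebesgue_on K)"
      using continuous_imp_measurable_on_sets_lebesgue[OF continuous_on_id fmeasurableD[OF lm]] by simp
    show "(\<lambda>x. B) integrable_on K" using integrable_on_const[OF lm] .
    show "\<And>x. x \<in> K \<Longrightarrow> norm x \<le> B" using B by auto
    show "K \<in> sets lebesgue" using fmeasurableD[OF lm] .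
  qed
  have I1: "integral K (\<lambda>x. x \<bullet> a) = integral K (\<lambda>x. x) \<bullet> a"
    using integral_component_eq[OF intid] .
  have I2: "integral K (\<lambda>x. b) \<le> integral K (\<lambda>x. x \<bullet> a)"
  proof (rule integral_le)
    show "(\<lambda>x. b) integrable_on K" using integrable_on_const[OF lm] .
    show "(\<lambda>x. x \<bullet> a) integrable_on K" using integrable_component[OF intid] .
    fix x assume "x \<in> K"
    then have "b < a \<bullet> x" using ab(2) closure_subset by blast
    then show "b \<le> x \<bullet> a" by (simp add: inner_commute)
  qed
  have I3: "integral K (\<lambda>x. b) = b * measure lebesgue K"
  proof -
    have "integral K (\<lambda>x. b * 1) = b * integral K (\<lambda>x. 1::real)" by (rule integral_mult_right)
    then show ?thesis using lmeasure_integral[OF lm] by simp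
  qed
  have "a \<bullet> mass_center K = (1 / measure lebesgue K) * (integral K (\<lambda>x. x) \<bullet> a)"
    unfolding mass_center_def by (simp add: inner_commute)
  also have "\<dots> \<ge> (1 / measure lebesgue K) * (b * measure lebesgue K)"
    using I1 I2 I3 pos by (intro mult_left_mono) auto
  also have "(1 / measure lebesgue K) * (b * measure lebesgue K) = b" using pos by simp
  finally show False using ab(1) by simp
qed



lemma face_core_lt:
  fixes a b s x fa fb fs fx da db ds dx :: real
  assumes ab: "a < b" "a \<le> x" "x \<le> b" "a \<le> s" "s \<le> b"
    and xdef: "fa + da*(x-a) = fb + db*(x-b)"
    and Tas: "fs \<ge> fa + da*(s-a)" and Tsa: "fa \<ge> fs + ds*(a-s)"
    and Tsx: "fx \<ge> fs + ds*(x-s)" and Txs: "fs \<ge> fx + dx*(s-x)"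
    and Txb: "fb \<ge> fx + dx*(b-x)" and Txa: "fa \<ge> fx + dx*(a-x)"
    and mono: "da \<le> ds" "ds \<le> db" "da \<le> dx" "dx \<le> db"
    and sx: "s \<le> x \<Longrightarrow> ds \<le> dx" "x \<le> s \<Longrightarrow> dx \<le> ds"
  shows "\<bar>fa - fs + da*(x-a) + 1/2*(da+db)*(s-x)\<bar> \<le> 3/4 * ((db-da)*(b-a))"
proof -
  define D where "D = db - da"
  have D0: "D \<ge> 0" using mono unfolding D_def by simp
  define Bs where "Bs = fs - fa - da*(s-a)"
  define Bx where "Bx = fx - fa - da*(x-a)"
  have e: "fa - fs + da*(x-a) + 1/2*(da+db)*(s-x) = - Bs + 1/2*D*(s-x)"
    unfolding Bs_def D_def by (simp add: field_simps)
  have Bs0: "Bs \<ge> 0" using Tas unfolding Bs_def by simp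
  have Bx1: "Bx \<le> D*(b-x)"
  proof -
    have "Bx = fx - fb - db*(x-b)" using xdef unfolding Bx_def by (simp add: algebra_simps)
    also have "\<dots> \<le> (db - dx)*(b-x)" using Txb by (simp add: algebra_simps)
    also have "\<dots> \<le> D*(b-x)" unfolding D_def using mono ab by (intro mult_right_mono) auto
    finally show ?thesis .
  qed
  have Bx2: "Bx \<le> D*(x-a)"
  proof -
    have "Bx \<le> (dx - da)*(x-a)" using Txa unfolding Bx_def by (simp add: algebra_simps)
    also have "\<dots> \<le> D*(x-a)" unfolding D_def using mono ab by (intro mult_right_mono) auto
    finally show ?thesis .
  qed
  have Bd: "\<bar>fa - fs + da*(x-a) + 1/2*(da+db)*(s-x)\<bar> \<le> 3/4 * (D*(b-a))"
  proof (cases "s \<le> x")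
    case True
    have Bs1: "Bs \<le> D*(s-a)"
    proof -
      have "Bs \<le> (ds - da)*(s-a)" using Tsa unfolding Bs_def by (simp add: algebra_simps)
      also have "\<dots> \<le> D*(s-a)" unfolding D_def using mono ab by (intro mult_right_mono) auto
      finally show ?thesis .
    qed
    have Bs2: "Bs \<le> Bx"
    proof -
      have "Bx - Bs = fx - fs - da*(x-s)" unfolding Bx_def Bs_def by (simp add: algebra_simps)
      also have "\<dots> \<ge> (ds - da)*(x-s)" using Tsx by (simp add: algebra_simps)
      moreover have "(ds - da)*(x-s) \<ge> 0" using mono True by simp
      ultimately show ?thesis by linarith
    qed
    define p where "p = D*(s-a)"
    define q where "q = D*(x-s)"
    define r where "r = D*(b-x)"
    define t where "t = D*(b-a)"
    have tt: "t = p + q + r" unfolding p_def q_def r_def t_def by (simp add: algebra_simps)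
    have nn: "p \<ge> 0" "q \<ge> 0" "r \<ge> 0" unfolding p_def q_def r_def using D0 True ab by simp_all
    have q: "- Bs + 1/2*D*(s-x) = -(Bs + 1/2*q)" unfolding q_def by (simp add: field_simps)
    have "Bs + 1/2*q \<le> 3/4*t" using Bs1 Bs2 Bx1 tt nn unfolding p_def[symmetric] r_def[symmetric] by linarith
    then have "\<bar>- Bs + 1/2*D*(s-x)\<bar> \<le> 3/4*t" unfolding q using Bs0 nn by simp
    then show ?thesis unfolding e t_def .
  next
    case False
    then have xs: "x \<le> s" by simp
    have Bs3: "Bs \<le> Bx + D*(s-x)"
    proof -
      have "Bs - Bx = fs - fx - da*(s-x)" unfolding Bx_def Bs_def by (simp add: algebra_simps)
      also have "\<dots> \<le> (ds - da)*(s-x)" using Tsx by (simp add: algebra_simps)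
      also have "\<dots> \<le> D*(s-x)" unfolding D_def using mono xs by (intro mult_right_mono) auto
      finally show ?thesis by simp
    qed
    define q where "q = D*(s-x)"
    define w where "w = D*(x-a)"
    define r where "r = D*(b-x)"
    define v where "v = D*(b-s)"
    define t where "t = D*(b-a)"
    have tt: "t = w + r" "q + v = r" unfolding q_def w_def r_def v_def t_def by (simp_all add: algebra_simps)
    have nn: "q \<ge> 0" "w \<ge> 0" "r \<ge> 0" "v \<ge> 0" unfolding q_def w_def r_def v_def using D0 xs ab by simp_all
    have ee: "- Bs + 1/2*D*(s-x) = - Bs + 1/2*q" unfolding q_def by (simp add: field_simps)
    have up: "- Bs + 1/2*q \<le> 3/4*t" using Bs0 nn tt by linarith
    have lo: "Bs - 1/2*q \<le> 3/4*t" using Bs3 Bx1 Bx2 nn tt unfolding q_def[symmetric] w_def[symmetric] r_def[symmetric] by linarith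
    have "\<bar>- Bs + 1/2*q\<bar> \<le> 3/4*t" unfolding abs_le_iff using up lo by linarith
    then show ?thesis unfolding e ee t_def .
  qed
  then show ?thesis unfolding D_def .
qed


definition good :: "(real \<Rightarrow> real) \<Rightarrow> bool" where
  "good \<phi> \<longleftrightarrow> (\<forall>x y. 0 < x \<longrightarrow> 0 < y \<longrightarrow> \<phi> x + deriv \<phi> x * (y - x) \<le> \<phi> y)
      \<and> (\<forall>x y. 0 < x \<longrightarrow> x < y \<longrightarrow> deriv \<phi> x < deriv \<phi> y)"

lemma goodT: "good \<phi> \<Longrightarrow> 0 < x \<Longrightarrow> 0 < y \<Longrightarrow> \<phi> x + deriv \<phi> x * (y - x) \<le> \<phi> y"
  unfolding good_def by blast

lemma goodM: "good \<phi> \<Longrightarrow> 0 < x \<Longrightarrow> x < y \<Longrightarrow> deriv \<phi> x < deriv \<phi> y"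
  unfolding good_def by blast

lemma goodM': "good \<phi> \<Longrightarrow> 0 < x \<Longrightarrow> x \<le> y \<Longrightarrow> deriv \<phi> x \<le> deriv \<phi> y"
  using goodM[of \<phi> x y] by (cases "x = y") auto

lemma between_sym: "between x a b = between x b a"
  unfolding between_def by (simp add: min.commute max.commute)

lemma xKL_sym: "xKL \<phi> b a = xKL \<phi> a b"
proof (cases "a = b")
  case True then show ?thesis by simp
next
  case False
  have "(\<lambda>x. between x b a \<and> \<phi> b + deriv \<phi> b * (x - b) = \<phi> a + deriv \<phi> a * (x - a))
      = (\<lambda>x. between x a b \<and> \<phi> a + deriv \<phi> a * (x - a) = \<phi> b + deriv \<phi> b * (x - b))"
    using between_sym by (intro ext) auto
  then show ?thesis unfolding xKL_def using False by simp
qed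

lemma xKL_lt:
  assumes g: "good \<phi>" and a: "0 < a" and ab: "a < b"
  shows "between (xKL \<phi> a b) a b \<and> \<phi> a + deriv \<phi> a * (xKL \<phi> a b - a) = \<phi> b + deriv \<phi> b * (xKL \<phi> a b - b)"
proof -
  have b: "0 < b" using a ab by simp
  define da where "da = deriv \<phi> a"
  define db where "db = deriv \<phi> b"
  have dlt: "da < db" unfolding da_def db_def using goodM[OF g a ab] .
  have den: "da - db < 0" using dlt by simp
  define x0 where "x0 = (\<phi> b - \<phi> a + da*a - db*b)/(da - db)"
  have eqx: "(da - db) * x0 = \<phi> b - \<phi> a + da*a - db*b" unfolding x0_def using den by simp
  have E: "\<phi> a + da * (x0 - a) = \<phi> b + db * (x0 - b)" using eqx by (simp add: algebra_simps)
  have Ta: "\<phi> a + da * (b - a) \<le> \<phi> b" unfolding da_def using goodT[OF g a b] .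
  have Tb: "\<phi> b + db * (a - b) \<le> \<phi> a" unfolding db_def using goodT[OF g b a] .
  have "(da - db) * (x0 - a) = \<phi> b - \<phi> a - db*(b-a)" using eqx by (simp add: algebra_simps)
  moreover have "\<phi> b - \<phi> a - db*(b-a) \<le> 0" using Tb by (simp add: algebra_simps)
  ultimately have "(da - db) * (x0 - a) \<le> 0" by simp
  then have xa: "a \<le> x0" using den by (simp add: mult_le_0_iff)
  have "(da - db) * (b - x0) = \<phi> a - \<phi> b + da*(b-a)" using eqx by (simp add: algebra_simps)
  moreover have "\<phi> a - \<phi> b + da*(b-a) \<le> 0" using Ta by (simp add: algebra_simps)
  ultimately have "(da - db) * (b - x0) \<le> 0" by simp
  then have xb: "x0 \<le> b" using den by (simp add: mult_le_0_iff)
  have P: "between x0 a b \<and> \<phi> a + da * (x0 - a) = \<phi> b + db * (x0 - b)"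
    using xa xb E ab unfolding between_def by simp
  have U: "y = x0" if "between y a b \<and> \<phi> a + da * (y - a) = \<phi> b + db * (y - b)" for y
  proof -
    have "(da - db) * y = (da - db) * x0" using that eqx by (simp add: algebra_simps)
    then show ?thesis using den by simp
  qed
  have P': "between x0 a b \<and> \<phi> a + deriv \<phi> a * (x0 - a) = \<phi> b + deriv \<phi> b * (x0 - b)"
    using P unfolding da_def db_def .
  have U': "y = x0" if "between y a b \<and> \<phi> a + deriv \<phi> a * (y - a) = \<phi> b + deriv \<phi> b * (y - b)" for y
    using U that unfolding da_def db_def by blast
  have "(THE x. between x a b \<and> \<phi> a + deriv \<phi> a * (x - a) = \<phi> b + deriv \<phi> b * (x - b)) = x0"
  proof (rule the_equality)
    show "between x0 a b \<and> \<phi> a + deriv \<phi> a * (x0 - a) = \<phi> b + deriv \<phi> b * (x0 - b)" using P' .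
    fix y assume "between y a b \<and> \<phi> a + deriv \<phi> a * (y - a) = \<phi> b + deriv \<phi> b * (y - b)"
    then show "y = x0" using U' by blast
  qed
  then have "xKL \<phi> a b = x0" unfolding xKL_def using ab by simp
  then show ?thesis using P' by simp
qed

lemma xKL_prop:
  assumes g: "good \<phi>" and a: "0 < a" and b: "0 < b"
  shows "between (xKL \<phi> a b) a b" "\<phi> a + deriv \<phi> a * (xKL \<phi> a b - a) = \<phi> b + deriv \<phi> b * (xKL \<phi> a b - b)"
proof -
  have "between (xKL \<phi> a b) a b \<and> \<phi> a + deriv \<phi> a * (xKL \<phi> a b - a) = \<phi> b + deriv \<phi> b * (xKL \<phi> a b - b)"
  proof (cases a b rule: linorder_cases)
    case less then show ?thesis using xKL_lt[OF g a] by blast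
  next
    case equal then show ?thesis by (simp add: xKL_def between_def)
  next
    case greater
    have "between (xKL \<phi> b a) b a \<and> \<phi> b + deriv \<phi> b * (xKL \<phi> b a - b) = \<phi> a + deriv \<phi> a * (xKL \<phi> b a - a)"
      using xKL_lt[OF g b greater] .
    then have c1: "between (xKL \<phi> b a) b a" and c2: "\<phi> b + deriv \<phi> b * (xKL \<phi> b a - b) = \<phi> a + deriv \<phi> a * (xKL \<phi> b a - a)"
      by (rule conjunct1, rule conjunct2)
    have e: "xKL \<phi> b a = xKL \<phi> a b" by (rule xKL_sym)
    show ?thesis using between_sym[THEN iffD1, OF c1[unfolded e]] c2[unfolded e, symmetric] by (rule conjI)
  qed
  then show "between (xKL \<phi> a b) a b" "\<phi> a + deriv \<phi> a * (xKL \<phi> a b - a) = \<phi> b + deriv \<phi> b * (xKL \<phi> a b - b)"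
    by auto
qed

lemma dphi_sym:
  assumes g: "good \<phi>" and a: "0 < a" and b: "0 < b"
  shows "dphi \<phi> b a s = dphi \<phi> a b s"
proof -
  have e: "xKL \<phi> b a = xKL \<phi> a b" by (rule xKL_sym)
  show ?thesis using xKL_prop(2)[OF g a b] unfolding dphi_def e by (simp add: algebra_simps)
qed


lemma mT: fixes fp fq d p q :: real shows "fp + d*(q-p) \<le> fq \<Longrightarrow> fq \<ge> fp + (-d)*((-q) - (-p))"
proof -
  assume h: "fp + d*(q-p) \<le> fq"
  have "(-d)*((-q) - (-p)) = d*(q-p)" by (simp add: algebra_simps)
  then show ?thesis using h by linarith
qed

lemma dphi_bound:
  assumes g: "good \<phi>" and a: "0 < a" and b: "0 < b"
    and hs: "between s a (xKL \<phi> a b) \<or> between s b (xKL \<phi> a b)"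
  shows "\<bar>dphi \<phi> a b s\<bar> \<le> 3/4 * (\<bar>deriv \<phi> b - deriv \<phi> a\<bar> * \<bar>b - a\<bar>)"
proof -
  define x where "x = xKL \<phi> a b"
  have bx: "between x a b" and E: "\<phi> a + deriv \<phi> a * (x - a) = \<phi> b + deriv \<phi> b * (x - b)"
    using xKL_prop[OF g a b] unfolding x_def by auto
  have hs': "between s a x \<or> between s b x" using hs unfolding x_def .
  have dp: "dphi \<phi> a b s = \<phi> a - \<phi> s + deriv \<phi> a * (x - a) + 1/2 * (deriv \<phi> a + deriv \<phi> b) * (s - x)"
    unfolding dphi_def x_def by simp
  show ?thesis
  proof (cases a b rule: linorder_cases)
    case equal
    then have "x = a" using bx unfolding between_def by simp
    then have "s = a" using hs' equal unfolding between_def by auto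
    then show ?thesis using dp \<open>x = a\<close> by simp
  next
    case less
    have xab: "a \<le> x" "x \<le> b" using bx less unfolding between_def by auto
    have sab: "a \<le> s" "s \<le> b" using hs' xab unfolding between_def by auto
    have x0: "0 < x" and s0: "0 < s" using xab sab a by auto
    have H: "\<bar>\<phi> a - \<phi> s + deriv \<phi> a * (x - a) + 1/2 * (deriv \<phi> a + deriv \<phi> b) * (s - x)\<bar>
        \<le> 3/4 * ((deriv \<phi> b - deriv \<phi> a) * (b - a))"
    proof (rule face_core_lt[OF less xab sab E])
      show "\<phi> a + deriv \<phi> a * (s - a) \<le> \<phi> s" using goodT[OF g a s0] .
      show "\<phi> s + deriv \<phi> s * (a - s) \<le> \<phi> a" using goodT[OF g s0 a] .
      show "\<phi> s + deriv \<phi> s * (x - s) \<le> \<phi> x" using goodT[OF g s0 x0] .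
      show "\<phi> x + deriv \<phi> x * (s - x) \<le> \<phi> s" using goodT[OF g x0 s0] .
      show "\<phi> x + deriv \<phi> x * (b - x) \<le> \<phi> b" using goodT[OF g x0 b] .
      show "\<phi> x + deriv \<phi> x * (a - x) \<le> \<phi> a" using goodT[OF g x0 a] .
      show "deriv \<phi> a \<le> deriv \<phi> s" "deriv \<phi> s \<le> deriv \<phi> b" "deriv \<phi> a \<le> deriv \<phi> x" "deriv \<phi> x \<le> deriv \<phi> b"
        using goodM'[OF g] a s0 x0 xab sab by auto
      show "s \<le> x \<Longrightarrow> deriv \<phi> s \<le> deriv \<phi> x" using goodM'[OF g s0] .
      show "x \<le> s \<Longrightarrow> deriv \<phi> x \<le> deriv \<phi> s" using goodM'[OF g x0] .
    qed
    have "deriv \<phi> a \<le> deriv \<phi> b" using goodM'[OF g a] less by simp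
    then have "(deriv \<phi> b - deriv \<phi> a) * (b - a) = \<bar>deriv \<phi> b - deriv \<phi> a\<bar> * \<bar>b - a\<bar>" using less by simp
    then show ?thesis using H dp by simp
  next
    case greater
    have xab: "b \<le> x" "x \<le> a" using bx greater unfolding between_def by auto
    have sab: "b \<le> s" "s \<le> a" using hs' xab unfolding between_def by auto
    have x0: "0 < x" and s0: "0 < s" using xab sab b by auto
    have l1: "-a < -b" using greater by simp
    have l2: "-a \<le> -x" "-x \<le> -b" "-a \<le> -s" "-s \<le> -b" using xab sab by auto
    have E': "\<phi> a + (- deriv \<phi> a) * ((-x) - (-a)) = \<phi> b + (- deriv \<phi> b) * ((-x) - (-b))"
      using E by (simp add: algebra_simps)
    have H: "\<bar>\<phi> a - \<phi> s + (- deriv \<phi> a) * ((-x) - (-a)) + 1/2 * ((- deriv \<phi> a) + (- deriv \<phi> b)) * ((-s) - (-x))\<bar>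
        \<le> 3/4 * (((- deriv \<phi> b) - (- deriv \<phi> a)) * ((-b) - (-a)))"
    proof (rule face_core_lt[OF l1 l2 E'])
      show "\<phi> s \<ge> \<phi> a + (- deriv \<phi> a) * ((-s) - (-a))" using mT[OF goodT[OF g a s0]] .
      show "\<phi> a \<ge> \<phi> s + (- deriv \<phi> s) * ((-a) - (-s))" using mT[OF goodT[OF g s0 a]] .
      show "\<phi> x \<ge> \<phi> s + (- deriv \<phi> s) * ((-x) - (-s))" using mT[OF goodT[OF g s0 x0]] .
      show "\<phi> s \<ge> \<phi> x + (- deriv \<phi> x) * ((-s) - (-x))" using mT[OF goodT[OF g x0 s0]] .
      show "\<phi> b \<ge> \<phi> x + (- deriv \<phi> x) * ((-b) - (-x))" using mT[OF goodT[OF g x0 b]] .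
      show "\<phi> a \<ge> \<phi> x + (- deriv \<phi> x) * ((-a) - (-x))" using mT[OF goodT[OF g x0 a]] .
      show "- deriv \<phi> a \<le> - deriv \<phi> s" "- deriv \<phi> s \<le> - deriv \<phi> b" "- deriv \<phi> a \<le> - deriv \<phi> x" "- deriv \<phi> x \<le> - deriv \<phi> b"
        using goodM'[OF g] b s0 x0 xab sab by auto
      show "- s \<le> - x \<Longrightarrow> - deriv \<phi> s \<le> - deriv \<phi> x" using goodM'[OF g x0, of s] by simp
      show "- x \<le> - s \<Longrightarrow> - deriv \<phi> x \<le> - deriv \<phi> s" using goodM'[OF g s0, of x] by simp
    qed
    have "deriv \<phi> b \<le> deriv \<phi> a" using goodM'[OF g b] greater by simp
    then have "((- deriv \<phi> b) - (- deriv \<phi> a)) * ((-b) - (-a)) = \<bar>deriv \<phi> b - deriv \<phi> a\<bar> * \<bar>b - a\<bar>"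
      using greater by (simp add: abs_if algebra_simps)
    moreover have "\<phi> a - \<phi> s + (- deriv \<phi> a) * ((-x) - (-a)) + 1/2 * ((- deriv \<phi> a) + (- deriv \<phi> b)) * ((-s) - (-x))
       = dphi \<phi> a b s" unfolding dp by (simp add: field_simps)
    ultimately show ?thesis using H by simp
  qed
qed

lemma dphi_sign:
  assumes g: "good \<phi>" and a: "0 < a" and b: "0 < b"
    and hs: "(u \<ge> 0 \<longrightarrow> between s a (xKL \<phi> a b)) \<and> (\<not> u \<ge> 0 \<longrightarrow> between s b (xKL \<phi> a b))"
  shows "u * (deriv \<phi> b - deriv \<phi> a) * (s - xKL \<phi> a b) \<le> 0"
proof -
  define x where "x = xKL \<phi> a b"
  have bx: "between x a b" using xKL_prop[OF g a b] unfolding x_def by auto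
  have hs': "(u \<ge> 0 \<longrightarrow> between s a x) \<and> (\<not> u \<ge> 0 \<longrightarrow> between s b x)" using hs unfolding x_def .
  have "u * ((deriv \<phi> b - deriv \<phi> a) * (s - x)) \<le> 0"
  proof (cases a b rule: linorder_cases)
    case equal then show ?thesis by simp
  next
    case less
    have D: "deriv \<phi> a \<le> deriv \<phi> b" using goodM'[OF g a] less by simp
    have xab: "a \<le> x" "x \<le> b" using bx less unfolding between_def by auto
    show ?thesis
    proof (cases "u \<ge> 0")
      case True
      then have "s \<le> x" using hs' xab unfolding between_def by auto
      then have "(deriv \<phi> b - deriv \<phi> a) * (s - x) \<le> 0" using D by (simp add: mult_nonneg_nonpos)
      then show ?thesis using True by (simp add: mult_nonneg_nonpos)
    next
      case False
      then have "x \<le> s" using hs' xab unfolding between_def by auto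
      then have "(deriv \<phi> b - deriv \<phi> a) * (s - x) \<ge> 0" using D by simp
      then show ?thesis using False by (simp add: mult_nonpos_nonneg)
    qed
  next
    case greater
    have D: "deriv \<phi> b \<le> deriv \<phi> a" using goodM'[OF g b] greater by simp
    have xab: "b \<le> x" "x \<le> a" using bx greater unfolding between_def by auto
    show ?thesis
    proof (cases "u \<ge> 0")
      case True
      then have "x \<le> s" using hs' xab unfolding between_def by auto
      then have "(deriv \<phi> b - deriv \<phi> a) * (s - x) \<le> 0" using D by (simp add: mult_nonpos_nonneg)
      then show ?thesis using True by (simp add: mult_nonneg_nonpos)
    next
      case False
      then have "s \<le> x" using hs' xab unfolding between_def by auto
      then have "(deriv \<phi> b - deriv \<phi> a) * (s - x) \<ge> 0" using D by (simp add: mult_nonpos_nonpos)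
      then show ?thesis using False by (simp add: mult_nonpos_nonneg)
    qed
  qed
  then show ?thesis unfolding x_def by (simp add: mult.assoc)
qed


lemma deriv_phi_rho: "0 < x \<Longrightarrow> deriv phi_rho x = ln x + 1"
proof -
  assume x: "0 < x"
  have "((\<lambda>z. z * ln z) has_real_derivative (1 * ln x + x * (1 / x))) (at x)"
    using x by (auto intro!: derivative_eq_intros)
  then have "(phi_rho has_real_derivative (ln x + 1)) (at x)"
    using x unfolding phi_rho_def[abs_def] by simp
  then show ?thesis by (rule DERIV_imp_deriv)
qed

lemma deriv_phi_e: "0 < x \<Longrightarrow> deriv (phi_e \<gamma>) x = - (1 / (\<gamma> - 1)) * (1 / x)"
proof -
  assume x: "0 < x"
  have "((\<lambda>z. - (1 / (\<gamma> - 1)) * ln z) has_real_derivative (- (1 / (\<gamma> - 1)) * inverse x)) (at x)"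
    by (rule DERIV_cmult[OF DERIV_ln[OF x]])
  then have "((\<lambda>z. - (1 / (\<gamma> - 1)) * ln z) has_real_derivative (- (1 / (\<gamma> - 1)) * (1 / x))) (at x)"
    by (simp only: inverse_eq_divide)
  moreover have eq: "phi_e \<gamma> = (\<lambda>z. - (1 / (\<gamma> - 1)) * ln z)" by (intro ext) (simp only: phi_e_def)
  ultimately have "(phi_e \<gamma> has_real_derivative (- (1 / (\<gamma> - 1)) * (1 / x))) (at x)"
    by simp
  then show ?thesis by (rule DERIV_imp_deriv)
qed

lemma good_rho: "good phi_rho"
  unfolding good_def
proof (intro conjI allI impI)
  fix x y :: real assume x: "0 < x" and y: "0 < y"
  have l: "ln (x / y) \<le> x / y - 1" using ln_le_minus_one x y by simp
  have "ln (x/y) = ln x - ln y" using x y by (simp add: ln_div)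
  then have "y * (ln x - ln y) \<le> y * (x / y - 1)" using l y by (intro mult_left_mono) auto
  then have "y * ln x - y * ln y \<le> x - y" using y by (simp add: algebra_simps)
  then show "phi_rho x + deriv phi_rho x * (y - x) \<le> phi_rho y"
    unfolding deriv_phi_rho[OF x] phi_rho_def by (simp add: algebra_simps)
next
  fix x y :: real assume x: "0 < x" and xy: "x < y"
  then show "deriv phi_rho x < deriv phi_rho y" using deriv_phi_rho[OF x] deriv_phi_rho[of y] by simp
qed

lemma good_e: assumes g: "\<gamma> > 1" shows "good (phi_e \<gamma>)"
  unfolding good_def
proof (intro conjI allI impI)
  define c where "c = 1 / (\<gamma> - 1)"
  have c: "c > 0" unfolding c_def using g by simp
  fix x y :: real assume x: "0 < x" and y: "0 < y"
  have l: "ln (y / x) \<le> y / x - 1" using ln_le_minus_one x y by simp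
  have "ln (y/x) = ln y - ln x" using x y by (simp add: ln_div)
  then have "c * (ln y - ln x) \<le> c * (y / x - 1)" using l c by (intro mult_left_mono) auto
  moreover have "c * (y / x - 1) = c * (1/x) * (y - x)" using x by (simp add: field_simps)
  ultimately have "c * ln y - c * ln x \<le> c * (1/x) * (y - x)" by (simp add: algebra_simps)
  then show "phi_e \<gamma> x + deriv (phi_e \<gamma>) x * (y - x) \<le> phi_e \<gamma> y"
    unfolding deriv_phi_e[OF x] phi_e_def c_def[symmetric] by (simp add: algebra_simps)
next
  define c where "c = 1 / (\<gamma> - 1)"
  have c: "c > 0" unfolding c_def using g by simp
  fix x y :: real assume x: "0 < x" and xy: "x < y"
  have "c / y < c / x" using c x xy by (simp add: divide_strict_left_mono)
  then show "deriv (phi_e \<gamma>) x < deriv (phi_e \<gamma>) y" using deriv_phi_e[OF x] deriv_phi_e[of y] x xy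
    unfolding c_def by simp
qed


lemma dphi_alt: "dphi \<phi> a b s = - (\<phi> s - \<phi> a - deriv \<phi> a * (s - a)) + 1/2 * (deriv \<phi> b - deriv \<phi> a) * (s - xKL \<phi> a b)"
  unfolding dphi_def by (simp add: field_simps)

lemma face_identity:
  fixes ar u s es r1 e1 fr1 frs dr1 fes fe1 de1 Dr xr De xe :: real
  assumes hr: "fr1 - r1 * dr1 = - r1"
  shows "ar*(frs + s*fes)*u + (-(ar* s*u)*dr1 - (ar* s*u)*fe1 - de1*((ar* s*u)*es - e1*(ar* s*u)) + r1*(ar*u))
     + (ar*(- (frs - fr1 - dr1 * (s - r1)) + 1/2 * Dr * (s - xr))*u
        + (- (fes - fe1 - de1 * (es - e1)) + 1/2 * De * (es - xe))*(ar* s*u))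
   = 1/2*ar*(u*Dr*(s-xr)) + 1/2*(ar* s)*(u*De*(es-xe))"
proof -
  have f: "fr1 = r1 * dr1 - r1" using hr by simp
  show ?thesis unfolding f by (simp add: field_simps)
qed

lemma face_entropy:
  fixes \<gamma> ar u s es r1 rL e1 eL :: real
  assumes g: "\<gamma> > 1" and ar: "ar > 0" and s: "s > 0" and es: "es > 0"
    and r1: "r1 > 0" and rL: "rL > 0" and e1: "e1 > 0" and eL: "eL > 0"
    and up: "if u \<ge> 0 then between s r1 (xKL phi_rho r1 rL) \<and> between es e1 (xKL (phi_e \<gamma>) e1 eL)
             else between s rL (xKL phi_rho r1 rL) \<and> between es eL (xKL (phi_e \<gamma>) e1 eL)"
  shows "ar*eta \<gamma> s es*u + (-(ar* s*u)*deriv phi_rho r1 - (ar* s*u)*phi_e \<gamma> e1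
      - deriv (phi_e \<gamma>) e1*((ar* s*u)*es - e1*(ar* s*u)) + r1*(ar*u))
      + (ar*dphi phi_rho r1 rL s*u + dphi (phi_e \<gamma>) e1 eL es*(ar* s*u)) \<le> 0"
proof -
  have hr: "phi_rho r1 - r1 * deriv phi_rho r1 = - r1"
    using r1 unfolding deriv_phi_rho[OF r1] phi_rho_def by (simp add: algebra_simps)
  have eq: "ar*eta \<gamma> s es*u + (-(ar* s*u)*deriv phi_rho r1 - (ar* s*u)*phi_e \<gamma> e1
      - deriv (phi_e \<gamma>) e1*((ar* s*u)*es - e1*(ar* s*u)) + r1*(ar*u))
      + (ar*dphi phi_rho r1 rL s*u + dphi (phi_e \<gamma>) e1 eL es*(ar* s*u))
      = 1/2*ar*(u*(deriv phi_rho rL - deriv phi_rho r1)*(s - xKL phi_rho r1 rL))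
        + 1/2*(ar* s)*(u*(deriv (phi_e \<gamma>) eL - deriv (phi_e \<gamma>) e1)*(es - xKL (phi_e \<gamma>) e1 eL))"
    unfolding dphi_alt eta_def by (rule face_identity[OF hr])
  have s1: "u*(deriv phi_rho rL - deriv phi_rho r1)*(s - xKL phi_rho r1 rL) \<le> 0"
    by (rule dphi_sign[OF good_rho r1 rL]) (use up in \<open>auto split: if_splits\<close>)
  have s2: "u*(deriv (phi_e \<gamma>) eL - deriv (phi_e \<gamma>) e1)*(es - xKL (phi_e \<gamma>) e1 eL) \<le> 0"
    by (rule dphi_sign[OF good_e[OF g] e1 eL]) (use up in \<open>auto split: if_splits\<close>)
  have "1/2*ar*(u*(deriv phi_rho rL - deriv phi_rho r1)*(s - xKL phi_rho r1 rL)) \<le> 0"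
    using s1 ar by (simp add: mult_nonneg_nonpos)
  moreover have "1/2*(ar* s)*(u*(deriv (phi_e \<gamma>) eL - deriv (phi_e \<gamma>) e1)*(es - xKL (phi_e \<gamma>) e1 eL)) \<le> 0"
    using s2 ar s by (simp add: mult_nonneg_nonpos)
  ultimately show ?thesis unfolding eq by linarith
qed


lemma time_ineq:
  fixes m r0 r1 e0 e1 p1 SF SFe SU fr0 fr1 dr1 fe0 fe1 de1 :: real
  assumes m: "m \<ge> 0" and r0: "r0 \<ge> 0" and mass: "m*(r1 - r0) + SF = 0"
   and en: "m*(r1*e1 - r0*e0) + SFe + p1*SU \<ge> 0" and de: "de1 \<le> 0" and dp: "de1 * p1 = - r1"
   and Tr: "fr1 + dr1*(r0 - r1) \<le> fr0" and Te: "fe1 + de1*(e0 - e1) \<le> fe0"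
  shows "m*((fr1 + r1*fe1) - (fr0 + r0*fe0)) \<le> -SF*dr1 - SF*fe1 - de1*(SFe - e1*SF) + r1*SU"
proof -
  have 1: "m*(fr1 - fr0) \<le> m*(dr1*(r1-r0))" using Tr m by (intro mult_left_mono) (auto simp: algebra_simps)
  have 2: "(m*r0)*(fe1 - fe0) \<le> (m*r0)*(de1*(e1-e0))" using Te m r0 by (intro mult_left_mono) (auto simp: algebra_simps)
  have 3: "de1*(m*(r1*e1 - r0*e0)) \<le> de1*(-SFe - p1*SU)" using en de by (intro mult_left_mono_neg) auto
  have SF: "SF = - (m*(r1-r0))" using mass by simp
  have i1: "m*((fr1 + r1*fe1) - (fr0 + r0*fe0)) = m*(fr1 - fr0) + fe1*(m*(r1-r0)) + (m*r0)*(fe1 - fe0)" by (simp add: algebra_simps)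
  have i2: "(m*r0)*(de1*(e1-e0)) = de1*(m*(r1*e1 - r0*e0)) - de1*e1*(m*(r1-r0))" by (simp add: algebra_simps)
  have i3: "de1*(-SFe - p1*SU) = -de1*SFe + r1*SU" using dp by (simp add: algebra_simps)
  have i4: "-SF*dr1 - SF*fe1 - de1*(SFe - e1*SF) + r1*SU = m*(dr1*(r1-r0)) + fe1*(m*(r1-r0)) + (-de1*SFe + r1*SU) - de1*e1*(m*(r1-r0))"
    unfolding SF by (simp add: algebra_simps)
  show ?thesis unfolding i1 i4 using 1 2 3 i2 i3 by linarith
qed


lemma abs_le_max_ends: fixes lo z hi :: real shows "lo \<le> z \<Longrightarrow> z \<le> hi \<Longrightarrow> \<bar>z\<bar> \<le> max \<bar>lo\<bar> \<bar>hi\<bar>"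
  by (auto simp: abs_if max_def)

lemma deriv_bound:
  assumes g: "good \<phi>" and Mb: "Mb > 1" and z: "1/Mb \<le> z" "z \<le> Mb"
  shows "\<bar>deriv \<phi> z\<bar> \<le> max \<bar>deriv \<phi> (1/Mb)\<bar> \<bar>deriv \<phi> Mb\<bar>"
proof -
  have p: "0 < 1/Mb" using Mb by simp
  have "deriv \<phi> (1/Mb) \<le> deriv \<phi> z" using goodM'[OF g p z(1)] .
  moreover have "deriv \<phi> z \<le> deriv \<phi> Mb" using goodM'[OF g _ z(2)] p z(1) by simp
  ultimately show ?thesis by (rule abs_le_max_ends)
qed

lemma dphi_bound2:
  assumes g: "good \<phi>" and Mb: "Mb > 1" and a: "1/Mb \<le> a" "a \<le> Mb" and b: "1/Mb \<le> b" "b \<le> Mb"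
    and hs: "between s a (xKL \<phi> a b) \<or> between s b (xKL \<phi> a b)"
  shows "\<bar>dphi \<phi> a b s\<bar> \<le> 3/2 * (max \<bar>deriv \<phi> (1/Mb)\<bar> \<bar>deriv \<phi> Mb\<bar> * \<bar>b - a\<bar>)"
proof -
  define P where "P = max \<bar>deriv \<phi> (1/Mb)\<bar> \<bar>deriv \<phi> Mb\<bar>"
  have a0: "0 < a" and b0: "0 < b" using a b Mb by (auto intro: less_le_trans[of 0 "1/Mb"])
  have "\<bar>deriv \<phi> b - deriv \<phi> a\<bar> \<le> \<bar>deriv \<phi> b\<bar> + \<bar>deriv \<phi> a\<bar>" by simp
  also have "\<dots> \<le> P + P" unfolding P_def using deriv_bound[OF g Mb a] deriv_bound[OF g Mb b] by simp
  finally have "\<bar>deriv \<phi> b - deriv \<phi> a\<bar> * \<bar>b - a\<bar> \<le> (2*P) * \<bar>b - a\<bar>" by (intro mult_right_mono) auto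
  then have h: "\<bar>deriv \<phi> b - deriv \<phi> a\<bar> * \<bar>b - a\<bar> \<le> 2 * (P * \<bar>b - a\<bar>)" by (simp add: mult.assoc)
  have "\<bar>dphi \<phi> a b s\<bar> \<le> 3/2 * (P * \<bar>b - a\<bar>)" using dphi_bound[OF g a0 b0 hs] h by linarith
  then show ?thesis unfolding P_def .
qed

lemma between_bound:
  fixes s a b x :: real
  assumes "between s a x \<or> between s b x" and "between x a b"
  shows "s \<le> max a b"
  using assms unfolding between_def by auto

lemma flux_abs_bound:
  fixes ar X U Y R x y Mb :: real
  assumes ar: "ar > 0" and X: "\<bar>X\<bar> \<le> x" and U: "\<bar>U\<bar> \<le> Mb" and Y: "\<bar>Y\<bar> \<le> y" and R: "\<bar>R\<bar> \<le> Mb"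
  shows "\<bar>ar*X*U + Y*(ar*R*U)\<bar> \<le> ar*x*Mb + y*(ar*Mb*Mb)"
proof -
  have M0: "Mb \<ge> 0" using U by linarith
  have x0: "x \<ge> 0" using X by linarith
  have y0: "y \<ge> 0" using Y by linarith
  have "\<bar>ar*X*U + Y*(ar*R*U)\<bar> \<le> \<bar>ar*X*U\<bar> + \<bar>Y*(ar*R*U)\<bar>" by (rule abs_triangle_ineq)
  also have "\<bar>ar*X*U\<bar> = ar*(\<bar>X\<bar>*\<bar>U\<bar>)" using ar by (simp add: abs_mult)
  also have "\<bar>Y*(ar*R*U)\<bar> = \<bar>Y\<bar>*(ar*(\<bar>R\<bar>*\<bar>U\<bar>))" using ar by (simp add: abs_mult)
  also have "ar*(\<bar>X\<bar>*\<bar>U\<bar>) \<le> ar*(x*Mb)" using X U ar x0 by (intro mult_left_mono mult_mono) auto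
  also have "\<bar>Y\<bar>*(ar*(\<bar>R\<bar>*\<bar>U\<bar>)) \<le> y*(ar*(Mb*Mb))" using Y U R ar y0 M0
    by (intro mult_mono mult_left_mono) (auto intro: mult_nonneg_nonneg)
  finally show ?thesis by (simp add: mult.assoc)
qed



lemma partial_deriv:
  fixes \<psi> :: "'a::euclidean_space \<times> real \<Rightarrow> real"
  assumes d: "\<psi> differentiable (at (x,t))"
  shows "((\<lambda>y. \<psi> (y,t)) has_derivative (\<lambda>h. frechet_derivative \<psi> (at (x,t)) (h,0))) (at x)"
proof -
  have p: "((\<lambda>y. (y,t)) has_derivative (\<lambda>h. (h,0))) (at x)"
    by (rule has_derivative_Pair[OF has_derivative_ident has_derivative_const])
  have q: "(\<psi> has_derivative frechet_derivative \<psi> (at (x,t))) (at (x,t))"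
    using d frechet_derivative_works by blast
  show ?thesis using has_derivative_compose[OF p q] by simp
qed

lemma onorm_partial:
  fixes D :: "'a::euclidean_space \<times> real \<Rightarrow> real"
  assumes bl: "bounded_linear D"
  shows "onorm (\<lambda>h. D (h,0)) \<le> (\<Sum>b\<in>Basis. \<bar>D (b,0)\<bar>)"
proof (rule onorm_le)
  fix h :: 'a
  have lin: "linear (\<lambda>h::'a. D (h,0))"
    using bounded_linear_compose[OF bl bounded_linear_Pair[OF bounded_linear_ident bounded_linear_zero]]
    by (simp add: bounded_linear.linear o_def)
  interpret L: linear "\<lambda>h::'a. D (h,0)" by (rule lin)
  have "D (h,0) = D ((\<Sum>b\<in>Basis. (h \<bullet> b) *\<^sub>R b), 0)" unfolding euclidean_representation ..
  also have "\<dots> = (\<Sum>b\<in>Basis. (h \<bullet> b) * D (b,0))" by (simp add: L.sum L.scale)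
  finally have e: "D (h,0) = (\<Sum>b\<in>Basis. (h \<bullet> b) * D (b,0))" .
  have "\<bar>D (h,0)\<bar> \<le> (\<Sum>b\<in>Basis. \<bar>(h \<bullet> b) * D (b,0)\<bar>)" unfolding e by (rule sum_abs)
  also have "\<dots> \<le> (\<Sum>b\<in>Basis. norm h * \<bar>D (b,0)\<bar>)"
  proof (rule sum_mono)
    fix b :: 'a assume b: "b \<in> Basis"
    have "\<bar>h \<bullet> b\<bar> \<le> norm h" using Basis_le_norm[OF b] .
    then show "\<bar>(h \<bullet> b) * D (b,0)\<bar> \<le> norm h * \<bar>D (b,0)\<bar>" by (simp add: abs_mult mult_right_mono)
  qed
  also have "\<dots> = (\<Sum>b\<in>Basis. \<bar>D (b,0)\<bar>) * norm h" by (simp add: sum_distrib_left mult.commute)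
  finally show "norm (D (h,0)) \<le> (\<Sum>b\<in>Basis. \<bar>D (b,0)\<bar>) * norm h" by simp
qed


lemma test_fun_props:
  fixes \<Omega> :: "'a::euclidean_space set" and \<psi> :: "'a \<times> real \<Rightarrow> real"
  assumes tf: "test_fun \<Omega> T \<psi>" and b\<Omega>: "bounded \<Omega>" and ne: "\<Omega> \<noteq> {}" and T: "T > 0"
  shows "0 \<le> grad_sup \<Omega> T \<psi>"
    and "\<And>S x y t. convex S \<Longrightarrow> S \<subseteq> closure \<Omega> \<Longrightarrow> x \<in> S \<Longrightarrow> y \<in> S \<Longrightarrow> 0 \<le> t \<Longrightarrow>
          \<bar>\<psi> (x,t) - \<psi> (y,t)\<bar> \<le> grad_sup \<Omega> T \<psi> * norm (x - y)"
proof -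
  have sm: "smooth_fun \<psi>" using tf unfolding test_fun_def by simp
  have "\<exists>T'<T. \<forall>x t. T' \<le> t \<longrightarrow> \<psi> (x, t) = 0" using tf unfolding test_fun_def by simp
  then obtain T' where T': "T' < T" "\<And>x t. T' \<le> t \<Longrightarrow> \<psi> (x, t) = 0" by auto
  have sm': "\<forall>vs x. iter_dd vs \<psi> differentiable (at x)" using sm unfolding smooth_fun_def .
  have d0: "\<psi> differentiable (at z)" for z
    using sm'[rule_format, of "[]" z] by simp
  have d1: "(\<lambda>z. frechet_derivative \<psi> (at z) (b,0)) differentiable (at z)" for b :: 'a and z
    using sm'[rule_format, of "[(b,0)]" z] by simp
  define GS where "GS = {onorm (frechet_derivative (\<lambda>y. \<psi> (y, t)) (at x)) | x t. x \<in> closure \<Omega> \<and> 0 \<le> t \<and> t < T}"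
  have gs: "grad_sup \<Omega> T \<psi> = Sup GS" unfolding grad_sup_def GS_def ..
  have fd: "frechet_derivative (\<lambda>y. \<psi> (y, t)) (at x) = (\<lambda>h. frechet_derivative \<psi> (at (x,t)) (h,0))" for x t
    using frechet_derivative_at[OF partial_deriv[OF d0]] by simp
  have bl: "bounded_linear (frechet_derivative \<psi> (at z))" for z
    using d0 frechet_derivative_works has_derivative_bounded_linear by blast
  have elt: "onorm (frechet_derivative (\<lambda>y. \<psi> (y, t)) (at x)) \<le> (\<Sum>b\<in>Basis. \<bar>frechet_derivative \<psi> (at (x,t)) (b,0)\<bar>)" for x t
    unfolding fd by (rule onorm_partial[OF bl])
  define C where "C = closure \<Omega> \<times> {0..T}"
  have cC: "compact C" unfolding C_def using b\<Omega> by (intro compact_Times) (auto simp: compact_closure)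
  have bnd: "\<exists>B. \<forall>z\<in>C. \<bar>frechet_derivative \<psi> (at z) (b,0)\<bar> \<le> B" for b :: 'a
  proof -
    have "continuous_on C (\<lambda>z. frechet_derivative \<psi> (at z) (b,0))"
      using d1 by (intro differentiable_imp_continuous_on) (auto simp: differentiable_on_def differentiable_at_withinI)
    then have "bounded ((\<lambda>z. frechet_derivative \<psi> (at z) (b,0)) ` C)"
      using compact_continuous_image[OF _ cC] compact_imp_bounded by blast
    then obtain B where "\<forall>v\<in>(\<lambda>z. frechet_derivative \<psi> (at z) (b,0)) ` C. norm v \<le> B" unfolding bounded_iff by blast
    then show ?thesis by auto
  qed
  then have "\<forall>b. \<exists>B. \<forall>z\<in>C. \<bar>frechet_derivative \<psi> (at z) (b,0)\<bar> \<le> B" by blast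
  then have "\<exists>Bf. \<forall>b. \<forall>z\<in>C. \<bar>frechet_derivative \<psi> (at z) (b,0)\<bar> \<le> Bf b" by (rule choice)
  then obtain Bf where Bf0: "\<forall>b. \<forall>z\<in>C. \<bar>frechet_derivative \<psi> (at z) (b,0)\<bar> \<le> Bf b" by blast
  have Bf: "\<And>b z. z \<in> C \<Longrightarrow> \<bar>frechet_derivative \<psi> (at z) (b,0)\<bar> \<le> Bf b" using Bf0 by blast
  have up: "v \<le> (\<Sum>b\<in>Basis. Bf b)" if vGS: "v \<in> GS" for v
  proof -
    obtain x t where v: "v = onorm (frechet_derivative (\<lambda>y. \<psi> (y, t)) (at x))" and xt: "x \<in> closure \<Omega>" "0 \<le> t" "t < T"
      using vGS unfolding GS_def by blast
    have z: "(x,t) \<in> C" unfolding C_def using xt by auto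
    have "v \<le> (\<Sum>b\<in>Basis. \<bar>frechet_derivative \<psi> (at (x,t)) (b,0)\<bar>)" unfolding v by (rule elt)
    also have "\<dots> \<le> (\<Sum>b\<in>Basis. Bf b)" by (rule sum_mono) (rule Bf[OF z])
    finally show ?thesis .
  qed
  have bdd: "bdd_above GS" by (rule bdd_aboveI[where M="\<Sum>b\<in>Basis. Bf b"]) (rule up)
  have mem: "onorm (frechet_derivative (\<lambda>y. \<psi> (y, t)) (at x)) \<le> grad_sup \<Omega> T \<psi>"
    if "x \<in> closure \<Omega>" "0 \<le> t" "t < T" for x t
  proof -
    have "onorm (frechet_derivative (\<lambda>y. \<psi> (y, t)) (at x)) \<in> GS" unfolding GS_def using that by blast
    then show ?thesis unfolding gs using bdd by (rule cSup_upper)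
  qed
  obtain x0 where x0: "x0 \<in> \<Omega>" using ne by blast
  have x0c: "x0 \<in> closure \<Omega>" using x0 closure_subset by blast
  have "0 \<le> onorm (frechet_derivative (\<lambda>y. \<psi> (y, 0)) (at x0))"
    unfolding fd by (rule onorm_pos_le) (rule bounded_linear_compose[OF bl[of "(x0,0)"] bounded_linear_Pair[OF bounded_linear_ident bounded_linear_zero], unfolded o_def])
  also have "\<dots> \<le> grad_sup \<Omega> T \<psi>" using mem[OF x0c _ T] by simp
  finally show G0: "0 \<le> grad_sup \<Omega> T \<psi>" .
  fix S :: "'a set" and x y :: 'a and t :: real assume cS: "convex S" and S: "S \<subseteq> closure \<Omega>" and x: "x \<in> S" and y: "y \<in> S" and t: "0 \<le> t"
  show "\<bar>\<psi> (x,t) - \<psi> (y,t)\<bar> \<le> grad_sup \<Omega> T \<psi> * norm (x - y)"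
  proof (cases "T' \<le> t")
    case True
    then show ?thesis using T'(2)[OF True] G0 by simp
  next
    case False
    then have tT: "t < T" using T' by simp
    have "norm ((\<lambda>y. \<psi> (y,t)) x - (\<lambda>y. \<psi> (y,t)) y) \<le> grad_sup \<Omega> T \<psi> * norm (x - y)"
    proof (rule differentiable_bound[OF cS _ _ x y])
      fix z assume z: "z \<in> S"
      show "((\<lambda>y. \<psi> (y,t)) has_derivative frechet_derivative (\<lambda>y. \<psi> (y, t)) (at z)) (at z within S)"
        unfolding fd by (rule has_derivative_at_withinI[OF partial_deriv[OF d0]])
      show "onorm (frechet_derivative (\<lambda>y. \<psi> (y, t)) (at z)) \<le> grad_sup \<Omega> T \<psi>"
        using mem[OF _ t tT] S z by blast
    qed
    then show ?thesis by simp
  qed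
qed



locale scheme =
  fixes \<Omega> :: "'a::euclidean_space set" and Msh :: "'a set set" and E :: "'a set set"
    and EK :: "'a set \<Rightarrow> 'a set set" and area :: "'a set \<Rightarrow> real"
    and T \<gamma> :: real and N :: nat
    and rho e p rhof ef :: "nat \<Rightarrow> 'a set \<Rightarrow> real"
    and u :: "nat \<Rightarrow> 'a set \<Rightarrow> 'a set \<Rightarrow> real"
    and dt :: real
  assumes dt_def: "dt = T / real N"
    and mesh: "polytopal_mesh \<Omega> Msh E EK"
    and area_pos: "\<forall>\<sigma>\<in>E. area \<sigma> > 0"
    and T_pos: "T > 0" and N_pos: "N \<ge> 1"
    and gamma: "\<gamma> > 1"
    and u_int: "\<forall>n\<le>N. \<forall>K\<in>Msh. \<forall>L\<in>Msh. \<forall>\<sigma>. K \<noteq> L \<and> \<sigma> \<in> EK K \<and> \<sigma> \<in> EK L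
                  \<longrightarrow> u n L \<sigma> = - u n K \<sigma>"
    and u_ext: "\<forall>n\<le>N. \<forall>K\<in>Msh. \<forall>\<sigma>\<in>EK K \<inter> ext_faces Msh EK E. u n K \<sigma> = 0"
    and pos: "\<forall>n\<le>N. \<forall>K\<in>Msh. rho n K > 0 \<and> e n K > 0 \<and> p n K > 0"
    and face_pos: "\<forall>n<N. \<forall>\<sigma>\<in>E. rhof (Suc n) \<sigma> > 0 \<and> ef (Suc n) \<sigma> > 0"
    and mass: "\<forall>n<N. \<forall>K\<in>Msh.
       measure lebesgue K / dt * (rho (Suc n) K - rho n K)
       + (\<Sum>\<sigma>\<in>EK K. area \<sigma> * rhof (Suc n) \<sigma> * u (Suc n) K \<sigma>) = 0"
    and energy: "\<forall>n<N. \<forall>K\<in>Msh.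
       measure lebesgue K / dt * (rho (Suc n) K * e (Suc n) K - rho n K * e n K)
       + (\<Sum>\<sigma>\<in>EK K. area \<sigma> * rhof (Suc n) \<sigma> * u (Suc n) K \<sigma> * ef (Suc n) \<sigma>)
       + p (Suc n) K * (\<Sum>\<sigma>\<in>EK K. area \<sigma> * u (Suc n) K \<sigma>) \<ge> 0"
    and eos: "\<forall>n<N. \<forall>K\<in>Msh. p (Suc n) K = (\<gamma> - 1) * rho (Suc n) K * e (Suc n) K"
    and upwind: "\<forall>n<N. \<forall>K\<in>Msh. \<forall>L\<in>Msh. \<forall>\<sigma>. K \<noteq> L \<and> \<sigma> \<in> EK K \<and> \<sigma> \<in> EK L \<longrightarrow>
       (if u (Suc n) K \<sigma> \<ge> 0 then
          between (rhof (Suc n) \<sigma>) (rho (Suc n) K) (xKL phi_rho (rho (Suc n) K) (rho (Suc n) L))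
          \<and> between (ef (Suc n) \<sigma>) (e (Suc n) K) (xKL (phi_e \<gamma>) (e (Suc n) K) (e (Suc n) L))
        else
          between (rhof (Suc n) \<sigma>) (rho (Suc n) L) (xKL phi_rho (rho (Suc n) K) (rho (Suc n) L))
          \<and> between (ef (Suc n) \<sigma>) (e (Suc n) L) (xKL (phi_e \<gamma>) (e (Suc n) K) (e (Suc n) L)))"
begin

lemma dt_pos: "dt > 0"
  using T_pos N_pos unfolding dt_def by simp

lemma cons:
  assumes n: "n \<le> N" and K: "K \<in> Msh" and L: "L \<in> Msh" and KL: "K \<noteq> L"
    and sK: "\<sigma> \<in> EK K" and sL: "\<sigma> \<in> EK L"
  shows "dR_flux \<gamma> Msh EK area rho rhof e ef u n L \<sigma> = - dR_flux \<gamma> Msh EK area rho rhof e ef u n K \<sigma>"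
proof -
  have nL: "nb Msh EK L \<sigma> = K" using two_cells(2)[OF mesh L K KL[symmetric] sL sK] .
  have nK: "nb Msh EK K \<sigma> = L" using two_cells(2)[OF mesh K L KL sK sL] .
  have pK: "rho n K > 0" "e n K > 0" using pos n K by auto
  have pL: "rho n L > 0" "e n L > 0" using pos n L by auto
  have uu: "u n L \<sigma> = - u n K \<sigma>" using u_int n K L KL sK sL by blast
  have d1: "dphi phi_rho (rho n L) (rho n K) (rhof n \<sigma>) = dphi phi_rho (rho n K) (rho n L) (rhof n \<sigma>)"
    by (rule dphi_sym[OF good_rho pK(1) pL(1)])
  have d2: "dphi (phi_e \<gamma>) (e n L) (e n K) (ef n \<sigma>) = dphi (phi_e \<gamma>) (e n K) (e n L) (ef n \<sigma>)"
    by (rule dphi_sym[OF good_e[OF gamma] pK(2) pL(2)])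
  show ?thesis unfolding dR_flux_def Let_def nL nK d1 d2 uu by (simp add: algebra_simps)
qed


lemma local_entropy:
  assumes n: "n < N" and K: "K \<in> Msh"
  shows "measure lebesgue K / dt * (eta \<gamma> (rho (Suc n) K) (e (Suc n) K) - eta \<gamma> (rho n K) (e n K))
        + (\<Sum>\<sigma>\<in>EK K. area \<sigma> * eta \<gamma> (rhof (Suc n) \<sigma>) (ef (Suc n) \<sigma>) * u (Suc n) K \<sigma>)
        + measure lebesgue K * dR \<gamma> Msh E EK area rho rhof e ef u (Suc n) K \<le> 0"
proof -
  define m where "m = measure lebesgue K / dt"
  define r1 where "r1 = rho (Suc n) K"
  define r0 where "r0 = rho n K"
  define e1 where "e1 = e (Suc n) K"
  define e0 where "e0 = e n K"
  define p1 where "p1 = p (Suc n) K"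
  define dr1 where "dr1 = deriv phi_rho r1"
  define fe1 where "fe1 = phi_e \<gamma> e1"
  define de1 where "de1 = deriv (phi_e \<gamma>) e1"
  define I where "I = int_faces Msh EK E"
  define F where "F \<sigma> = area \<sigma> * rhof (Suc n) \<sigma> * u (Suc n) K \<sigma>" for \<sigma>
  define A where "A \<sigma> = area \<sigma> * u (Suc n) K \<sigma>" for \<sigma>
  define Tf where "Tf \<sigma> = -(F \<sigma>)*dr1 - F \<sigma>*fe1 - de1*(F \<sigma> * ef (Suc n) \<sigma> - e1 * F \<sigma>) + r1*A \<sigma>" for \<sigma>
  define H where "H \<sigma> = area \<sigma> * eta \<gamma> (rhof (Suc n) \<sigma>) (ef (Suc n) \<sigma>) * u (Suc n) K \<sigma>" for \<sigma>
  define D where "D \<sigma> = dR_flux \<gamma> Msh EK area rho rhof e ef u (Suc n) K \<sigma>" for \<sigma>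
  define SF where "SF = (\<Sum>\<sigma>\<in>EK K. F \<sigma>)"
  define SFe where "SFe = (\<Sum>\<sigma>\<in>EK K. F \<sigma> * ef (Suc n) \<sigma>)"
  define SU where "SU = (\<Sum>\<sigma>\<in>EK K. A \<sigma>)"
  have fin: "finite (EK K)" using mesh_D(6)[OF mesh] K by auto
  have nN: "Suc n \<le> N" "n \<le> N" using n by auto
  have pr1: "r1 > 0" "e1 > 0" unfolding r1_def e1_def using pos nN K by auto
  have pr0: "r0 > 0" "e0 > 0" unfolding r0_def e0_def using pos nN K by auto
  have mK: "measure lebesgue K > 0" using cell_basic(7)[OF mesh K] .
  have m0: "m \<ge> 0" unfolding m_def using mK dt_pos by simp
    have massK: "m*(r1 - r0) + SF = 0" using mass n K unfolding m_def r1_def r0_def SF_def F_def by auto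
  have enK: "m*(r1*e1 - r0*e0) + SFe + p1*SU \<ge> 0"
    using energy n K unfolding m_def r1_def r0_def e1_def e0_def SFe_def F_def p1_def SU_def A_def by auto
  have de1: "de1 = - (1 / (\<gamma> - 1)) * (1 / e1)" unfolding de1_def using deriv_phi_e[OF pr1(2)] .
  have de0: "de1 \<le> 0" unfolding de1 using gamma pr1 by simp
  have p1e: "p1 = (\<gamma> - 1) * r1 * e1" unfolding p1_def r1_def e1_def using eos n K by auto
  have dp: "de1 * p1 = - r1" unfolding de1 p1e using gamma pr1 by (simp add: field_simps)
  have Tr: "phi_rho r1 + dr1*(r0 - r1) \<le> phi_rho r0" unfolding dr1_def using goodT[OF good_rho pr1(1) pr0(1)] .
  have Te: "fe1 + de1*(e0 - e1) \<le> phi_e \<gamma> e0" unfolding fe1_def de1_def using goodT[OF good_e[OF gamma] pr1(2) pr0(2)] .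
  have TI: "m*((phi_rho r1 + r1*fe1) - (phi_rho r0 + r0*phi_e \<gamma> e0)) \<le> -SF*dr1 - SF*fe1 - de1*(SFe - e1*SF) + r1*SU"
    by (rule time_ineq[OF m0 _ massK enK de0 dp Tr Te]) (use pr0 in simp)
  have sumT: "(\<Sum>\<sigma>\<in>EK K. Tf \<sigma>) = -SF*dr1 - SF*fe1 - de1*(SFe - e1*SF) + r1*SU"
  proof -
    have "(\<Sum>\<sigma>\<in>EK K. Tf \<sigma>) = (\<Sum>\<sigma>\<in>EK K. (-dr1 - fe1 + de1*e1) * F \<sigma> + (- de1) * (F \<sigma> * ef (Suc n) \<sigma>) + r1 * A \<sigma>)"
      unfolding Tf_def by (rule sum.cong) (auto simp: algebra_simps)
    also have "\<dots> = (-dr1 - fe1 + de1*e1) * SF + (- de1) * SFe + r1 * SU"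
      unfolding SF_def SFe_def SU_def by (simp add: sum.distrib sum_subtractf sum_distrib_left sum_negf)
    finally show ?thesis by (simp add: algebra_simps)
  qed
  have time: "m * (eta \<gamma> r1 e1 - eta \<gamma> r0 e0) \<le> (\<Sum>\<sigma>\<in>EK K. Tf \<sigma>)"
    using TI unfolding sumT eta_def fe1_def .
    have faceI: "H \<sigma> + Tf \<sigma> + D \<sigma> \<le> 0" if s: "\<sigma> \<in> EK K \<inter> I" for \<sigma>
  proof -
    have sK: "\<sigma> \<in> EK K" and sI: "\<sigma> \<in> int_faces Msh EK E" using s unfolding I_def by auto
    define L where "L = nb Msh EK K \<sigma>"
    have L: "L \<in> Msh" "L \<noteq> K" "\<sigma> \<in> EK L" using int_face_other[OF mesh K sK sI] unfolding L_def by auto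
    have sE: "\<sigma> \<in> E" using face_basic(3)[OF mesh K sK] .
    have ar: "area \<sigma> > 0" using area_pos sE by auto
    have fp: "rhof (Suc n) \<sigma> > 0" "ef (Suc n) \<sigma> > 0" using face_pos n sE by auto
    have pL: "rho (Suc n) L > 0" "e (Suc n) L > 0" using pos nN L(1) by auto
    have up: "if u (Suc n) K \<sigma> \<ge> 0 then
          between (rhof (Suc n) \<sigma>) r1 (xKL phi_rho r1 (rho (Suc n) L))
          \<and> between (ef (Suc n) \<sigma>) e1 (xKL (phi_e \<gamma>) e1 (e (Suc n) L))
        else
          between (rhof (Suc n) \<sigma>) (rho (Suc n) L) (xKL phi_rho r1 (rho (Suc n) L))
          \<and> between (ef (Suc n) \<sigma>) (e (Suc n) L) (xKL (phi_e \<gamma>) e1 (e (Suc n) L))"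
      using upwind n K L sK unfolding r1_def e1_def by auto
    have "area \<sigma> * eta \<gamma> (rhof (Suc n) \<sigma>) (ef (Suc n) \<sigma>) * u (Suc n) K \<sigma>
      + (-(area \<sigma> * rhof (Suc n) \<sigma> * u (Suc n) K \<sigma>)*deriv phi_rho r1 - (area \<sigma> * rhof (Suc n) \<sigma> * u (Suc n) K \<sigma>)*phi_e \<gamma> e1
      - deriv (phi_e \<gamma>) e1*((area \<sigma> * rhof (Suc n) \<sigma> * u (Suc n) K \<sigma>)*ef (Suc n) \<sigma> - e1*(area \<sigma> * rhof (Suc n) \<sigma> * u (Suc n) K \<sigma>)) + r1*(area \<sigma> * u (Suc n) K \<sigma>))
      + (area \<sigma> * dphi phi_rho r1 (rho (Suc n) L) (rhof (Suc n) \<sigma>) * u (Suc n) K \<sigma>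
         + dphi (phi_e \<gamma>) e1 (e (Suc n) L) (ef (Suc n) \<sigma>) * (area \<sigma> * rhof (Suc n) \<sigma> * u (Suc n) K \<sigma>)) \<le> 0"
      by (rule face_entropy[OF gamma ar fp pr1(1) pL(1) pr1(2) pL(2) up])
    then show ?thesis unfolding H_def Tf_def F_def A_def D_def dR_flux_def Let_def L_def[symmetric]
      dr1_def fe1_def de1_def r1_def e1_def .
  qed
  have faceE: "H \<sigma> + Tf \<sigma> = 0" if s: "\<sigma> \<in> EK K" "\<sigma> \<notin> I" for \<sigma>
  proof -
    have sE: "\<sigma> \<in> E" using face_basic(3)[OF mesh K s(1)] .
    have "\<sigma> \<in> EK K \<inter> ext_faces Msh EK E" using s sE unfolding ext_faces_def I_def by auto
    then have "u (Suc n) K \<sigma> = 0" using u_ext nN K by auto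
    then show ?thesis unfolding H_def Tf_def F_def A_def by simp
  qed
  have dRK: "measure lebesgue K * dR \<gamma> Msh E EK area rho rhof e ef u (Suc n) K = (\<Sum>\<sigma>\<in>EK K \<inter> I. D \<sigma>)"
    unfolding dR_def D_def I_def using mK by simp
  have s1: "(\<Sum>\<sigma>\<in>EK K. H \<sigma> + Tf \<sigma>) = (\<Sum>\<sigma>\<in>EK K \<inter> I. H \<sigma> + Tf \<sigma>)"
    by (rule sum.mono_neutral_right[OF fin]) (auto intro: faceE)
  have s2: "(\<Sum>\<sigma>\<in>EK K \<inter> I. H \<sigma> + Tf \<sigma>) + (\<Sum>\<sigma>\<in>EK K \<inter> I. D \<sigma>) \<le> 0"
  proof -
    have "(\<Sum>\<sigma>\<in>EK K \<inter> I. H \<sigma> + Tf \<sigma>) + (\<Sum>\<sigma>\<in>EK K \<inter> I. D \<sigma>) = (\<Sum>\<sigma>\<in>EK K \<inter> I. H \<sigma> + Tf \<sigma> + D \<sigma>)"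
      by (simp add: sum.distrib)
    also have "\<dots> \<le> 0" by (rule sum_nonpos) (rule faceI)
    finally show ?thesis .
  qed
  have "(\<Sum>\<sigma>\<in>EK K. H \<sigma> + Tf \<sigma>) = (\<Sum>\<sigma>\<in>EK K. H \<sigma>) + (\<Sum>\<sigma>\<in>EK K. Tf \<sigma>)" by (simp add: sum.distrib)
  then have "m * (eta \<gamma> r1 e1 - eta \<gamma> r0 e0) + (\<Sum>\<sigma>\<in>EK K. H \<sigma>) + measure lebesgue K * dR \<gamma> Msh E EK area rho rhof e ef u (Suc n) K \<le> 0"
    using time s1 s2 dRK by linarith
  then show ?thesis unfolding m_def H_def r1_def e1_def r0_def e0_def .
qed


lemma flux_cancel:
  assumes n: "n \<le> N"
  shows "(\<Sum>K\<in>Msh. \<Sum>\<sigma>\<in>EK K. g \<sigma> * u n K \<sigma>) = 0"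
proof (rule cancel_all[OF mesh])
  fix K L \<sigma> assume "K \<in> Msh" "L \<in> Msh" "K \<noteq> L" "\<sigma> \<in> EK K" "\<sigma> \<in> EK L"
  then have "u n L \<sigma> = - u n K \<sigma>" using u_int n by blast
  then show "g \<sigma> * u n L \<sigma> = - (g \<sigma> * u n K \<sigma>)" by simp
next
  fix K \<sigma> assume K: "K \<in> Msh" and s: "\<sigma> \<in> EK K" and nI: "\<sigma> \<notin> int_faces Msh EK E"
  have sE: "\<sigma> \<in> E" using face_basic(3)[OF mesh K s] .
  have "\<sigma> \<in> EK K \<inter> ext_faces Msh EK E" using s sE nI unfolding ext_faces_def by auto
  then have "u n K \<sigma> = 0" using u_ext n K by auto
  then show "g \<sigma> * u n K \<sigma> = 0" by simp
qed

lemma dR_cancel: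
  assumes n: "n \<le> N"
  shows "(\<Sum>K\<in>Msh. measure lebesgue K * dR \<gamma> Msh E EK area rho rhof e ef u n K) = 0"
proof -
  have "(\<Sum>K\<in>Msh. measure lebesgue K * dR \<gamma> Msh E EK area rho rhof e ef u n K)
     = (\<Sum>K\<in>Msh. \<Sum>\<sigma>\<in>EK K \<inter> int_faces Msh EK E. dR_flux \<gamma> Msh EK area rho rhof e ef u n K \<sigma>)"
  proof (rule sum.cong[OF refl])
    fix K assume K: "K \<in> Msh"
    have "measure lebesgue K > 0" using cell_basic(7)[OF mesh K] .
    then show "measure lebesgue K * dR \<gamma> Msh E EK area rho rhof e ef u n K
      = (\<Sum>\<sigma>\<in>EK K \<inter> int_faces Msh EK E. dR_flux \<gamma> Msh EK area rho rhof e ef u n K \<sigma>)"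
      unfolding dR_def by simp
  qed
  also have "\<dots> = 0"
    by (rule cancel_int[OF mesh]) (rule cons[OF n])
  finally show ?thesis .
qed

lemma global_entropy:
  assumes n: "n < N"
  shows "(\<Sum>K\<in>Msh. measure lebesgue K * eta \<gamma> (rho (Suc n) K) (e (Suc n) K))
             \<le> (\<Sum>K\<in>Msh. measure lebesgue K * eta \<gamma> (rho n K) (e n K))"
proof -
  let ?H = "\<lambda>K. (\<Sum>\<sigma>\<in>EK K. area \<sigma> * eta \<gamma> (rhof (Suc n) \<sigma>) (ef (Suc n) \<sigma>) * u (Suc n) K \<sigma>)"
  let ?R = "\<lambda>K. measure lebesgue K * dR \<gamma> Msh E EK area rho rhof e ef u (Suc n) K"
  let ?D = "\<lambda>K. measure lebesgue K / dt * (eta \<gamma> (rho (Suc n) K) (e (Suc n) K) - eta \<gamma> (rho n K) (e n K))"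
  have "(\<Sum>K\<in>Msh. ?D K + ?H K + ?R K) \<le> 0"
    by (rule sum_nonpos) (rule local_entropy[OF n])
  moreover have "(\<Sum>K\<in>Msh. ?D K + ?H K + ?R K) = (\<Sum>K\<in>Msh. ?D K) + (\<Sum>K\<in>Msh. ?H K) + (\<Sum>K\<in>Msh. ?R K)"
    by (simp add: sum.distrib)
  moreover have "(\<Sum>K\<in>Msh. ?H K) = 0"
    using flux_cancel[of "Suc n" "\<lambda>\<sigma>. area \<sigma> * eta \<gamma> (rhof (Suc n) \<sigma>) (ef (Suc n) \<sigma>)"] n by simp
  moreover have "(\<Sum>K\<in>Msh. ?R K) = 0" using dR_cancel[of "Suc n"] n by simp
  ultimately have le: "(\<Sum>K\<in>Msh. ?D K) \<le> 0" by linarith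
  define X where "X = (\<Sum>K\<in>Msh. measure lebesgue K * eta \<gamma> (rho (Suc n) K) (e (Suc n) K))
             - (\<Sum>K\<in>Msh. measure lebesgue K * eta \<gamma> (rho n K) (e n K))"
  have "(\<Sum>K\<in>Msh. ?D K) = X / dt"
  proof -
    have "(\<Sum>K\<in>Msh. ?D K) = (\<Sum>K\<in>Msh. (measure lebesgue K * eta \<gamma> (rho (Suc n) K) (e (Suc n) K)
         - measure lebesgue K * eta \<gamma> (rho n K) (e n K)) / dt)"
      by (rule sum.cong) (auto simp: diff_divide_distrib right_diff_distrib)
    also have "\<dots> = X / dt" unfolding X_def sum_divide_distrib[symmetric] sum_subtractf ..
    finally show ?thesis .
  qed
  then have X: "X / dt \<le> 0" using le by simp
  have "X \<le> 0"
  proof (rule ccontr)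
    assume "\<not> X \<le> 0"
    then have "X / dt > 0" using dt_pos by simp
    then show False using X by simp
  qed
  then show ?thesis unfolding X_def by simp
qed


lemma inv_le_imp: fixes x M :: real shows "0 < x \<Longrightarrow> 0 < M \<Longrightarrow> 1 / x \<le> M \<Longrightarrow> 1 / M \<le> x"
  by (simp add: field_simps)

lemma flux_bound:
  assumes n1: "1 \<le> n" "n \<le> N" and Mb: "Mb > 1"
    and bnds: "\<forall>n\<le>N. \<forall>K\<in>Msh. rho n K \<le> Mb \<and> 1 / rho n K \<le> Mb \<and> e n K \<le> Mb \<and> 1 / e n K \<le> Mb
             \<and> (\<forall>\<sigma>\<in>EK K. \<bar>u n K \<sigma>\<bar> \<le> Mb)"
    and sI: "\<sigma> \<in> int_faces Msh EK E"
  shows "\<bar>dR_flux \<gamma> Msh EK area rho rhof e ef u n (some_cell Msh EK \<sigma>) \<sigma>\<bar>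
    \<le> 3/2 * Mb * (area \<sigma> * (max \<bar>deriv phi_rho (1/Mb)\<bar> \<bar>deriv phi_rho Mb\<bar>
           * \<bar>rho n (nb Msh EK (some_cell Msh EK \<sigma>) \<sigma>) - rho n (some_cell Msh EK \<sigma>)\<bar>
         + Mb * max \<bar>deriv (phi_e \<gamma>) (1/Mb)\<bar> \<bar>deriv (phi_e \<gamma>) Mb\<bar>
           * \<bar>e n (nb Msh EK (some_cell Msh EK \<sigma>) \<sigma>) - e n (some_cell Msh EK \<sigma>)\<bar>))"
proof -
  define K where "K = some_cell Msh EK \<sigma>"
  define L where "L = nb Msh EK K \<sigma>"
  define Pr where "Pr = max \<bar>deriv phi_rho (1/Mb)\<bar> \<bar>deriv phi_rho Mb\<bar>"
  define Pe where "Pe = max \<bar>deriv (phi_e \<gamma>) (1/Mb)\<bar> \<bar>deriv (phi_e \<gamma>) Mb\<bar>"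
  note c = int_face_cells[OF mesh sI, folded K_def, folded L_def]
  obtain n' where n': "n = Suc n'" "n' < N" using n1 by (cases n) auto
  have M0: "0 < Mb" using Mb by simp
  have bK: "rho n K \<le> Mb" "1 / rho n K \<le> Mb" "e n K \<le> Mb" "1 / e n K \<le> Mb" "\<bar>u n K \<sigma>\<bar> \<le> Mb"
    using bnds n1 c(1) c(2) by auto
  have bL: "rho n L \<le> Mb" "1 / rho n L \<le> Mb" "e n L \<le> Mb" "1 / e n L \<le> Mb"
    using bnds n1 c(3) by auto
  have pK: "rho n K > 0" "e n K > 0" using pos n1 c(1) by auto
  have pL: "rho n L > 0" "e n L > 0" using pos n1 c(3) by auto
  have lK: "1/Mb \<le> rho n K" "1/Mb \<le> e n K" using inv_le_imp[OF pK(1) M0 bK(2)] inv_le_imp[OF pK(2) M0 bK(4)] by auto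
  have lL: "1/Mb \<le> rho n L" "1/Mb \<le> e n L" using inv_le_imp[OF pL(1) M0 bL(2)] inv_le_imp[OF pL(2) M0 bL(4)] by auto
  have up: "if u n K \<sigma> \<ge> 0 then
          between (rhof n \<sigma>) (rho n K) (xKL phi_rho (rho n K) (rho n L))
          \<and> between (ef n \<sigma>) (e n K) (xKL (phi_e \<gamma>) (e n K) (e n L))
        else
          between (rhof n \<sigma>) (rho n L) (xKL phi_rho (rho n K) (rho n L))
          \<and> between (ef n \<sigma>) (e n L) (xKL (phi_e \<gamma>) (e n K) (e n L))"
    using upwind n' c(1) c(3) c(4) c(2) c(5) by auto
  have hr: "between (rhof n \<sigma>) (rho n K) (xKL phi_rho (rho n K) (rho n L)) \<or> between (rhof n \<sigma>) (rho n L) (xKL phi_rho (rho n K) (rho n L))"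
    using up by (auto split: if_splits)
  have he: "between (ef n \<sigma>) (e n K) (xKL (phi_e \<gamma>) (e n K) (e n L)) \<or> between (ef n \<sigma>) (e n L) (xKL (phi_e \<gamma>) (e n K) (e n L))"
    using up by (auto split: if_splits)
  have X: "\<bar>dphi phi_rho (rho n K) (rho n L) (rhof n \<sigma>)\<bar> \<le> 3/2 * (Pr * \<bar>rho n L - rho n K\<bar>)"
    unfolding Pr_def by (rule dphi_bound2[OF good_rho Mb lK(1) bK(1) lL(1) bL(1) hr])
  have Y: "\<bar>dphi (phi_e \<gamma>) (e n K) (e n L) (ef n \<sigma>)\<bar> \<le> 3/2 * (Pe * \<bar>e n L - e n K\<bar>)"
    unfolding Pe_def by (rule dphi_bound2[OF good_e[OF gamma] Mb lK(2) bK(3) lL(2) bL(3) he])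
  have sE: "\<sigma> \<in> E" using face_basic(3)[OF mesh c(1) c(2)] .
  have ar: "area \<sigma> > 0" using area_pos sE by auto
  have rf0: "rhof n \<sigma> > 0" using face_pos n' sE by auto
  have "rhof n \<sigma> \<le> max (rho n K) (rho n L)"
    by (rule between_bound[OF hr xKL_prop(1)[OF good_rho pK(1) pL(1)]])
  then have R: "\<bar>rhof n \<sigma>\<bar> \<le> Mb" using rf0 bK(1) bL(1) by simp
  have "\<bar>area \<sigma> * dphi phi_rho (rho n K) (rho n L) (rhof n \<sigma>) * u n K \<sigma>
      + dphi (phi_e \<gamma>) (e n K) (e n L) (ef n \<sigma>) * (area \<sigma> * rhof n \<sigma> * u n K \<sigma>)\<bar>
    \<le> area \<sigma> * (3/2 * (Pr * \<bar>rho n L - rho n K\<bar>)) * Mb + (3/2 * (Pe * \<bar>e n L - e n K\<bar>)) * (area \<sigma> * Mb * Mb)"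
    by (rule flux_abs_bound[OF ar X bK(5) Y R])
  also have "\<dots> = 3/2 * Mb * (area \<sigma> * (Pr * \<bar>rho n L - rho n K\<bar> + Mb * Pe * \<bar>e n L - e n K\<bar>))"
    by (simp add: algebra_simps)
  finally show ?thesis unfolding dR_flux_def Let_def L_def[symmetric] K_def[symmetric] Pr_def[symmetric] Pe_def[symmetric] .
qed

lemma psi_bound:
  assumes tf: "test_fun \<Omega> T \<psi>" and sI: "\<sigma> \<in> int_faces Msh EK E" and t: "0 \<le> t"
  shows "\<bar>\<psi> (mass_center (some_cell Msh EK \<sigma>), t) - \<psi> (mass_center (nb Msh EK (some_cell Msh EK \<sigma>) \<sigma>), t)\<bar>
     \<le> grad_sup \<Omega> T \<psi> * (2 * mesh_size Msh)"
proof -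
  define K where "K = some_cell Msh EK \<sigma>"
  define L where "L = nb Msh EK K \<sigma>"
  define G where "G = grad_sup \<Omega> T \<psi>"
  note c = int_face_cells[OF mesh sI, folded K_def, folded L_def]
  note tp = test_fun_props[OF tf mesh_ne(3)[OF mesh] mesh_ne(2)[OF mesh] T_pos, folded G_def]
  obtain y where y: "y \<in> \<sigma>" using face_basic(1)[OF mesh c(1) c(2)] by blast
  have yK: "y \<in> closure K" using face_basic(2)[OF mesh c(1) c(2)] y by blast
  have yL: "y \<in> closure L" using face_basic(2)[OF mesh c(3) c(5)] y by blast
  have cen: "mass_center K \<in> closure K" if "K \<in> Msh" for K
    using centroid_in_closure[OF cell_basic(2)[OF mesh that] cell_basic(3)[OF mesh that] cell_basic(6)[OF mesh that] cell_basic(7)[OF mesh that]] .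
  have sub: "closure K \<subseteq> closure \<Omega>" if "K \<in> Msh" for K
    using closure_mono[OF cell_basic(5)[OF mesh that]] .
  have d1: "\<bar>\<psi> (mass_center K, t) - \<psi> (y, t)\<bar> \<le> G * norm (mass_center K - y)"
    by (rule tp(2)[OF convex_closure[OF cell_basic(3)[OF mesh c(1)]] sub[OF c(1)] cen[OF c(1)] yK t])
  have d2: "\<bar>\<psi> (y, t) - \<psi> (mass_center L, t)\<bar> \<le> G * norm (y - mass_center L)"
  proof -
    have "\<bar>\<psi> (mass_center L, t) - \<psi> (y, t)\<bar> \<le> G * norm (mass_center L - y)"
      by (rule tp(2)[OF convex_closure[OF cell_basic(3)[OF mesh c(3)]] sub[OF c(3)] cen[OF c(3)] yL t])
    then show ?thesis by (simp add: abs_minus_commute norm_minus_commute)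
  qed
  have n1: "G * norm (mass_center K - y) \<le> G * mesh_size Msh"
    using cell_dist[OF mesh c(1) cen[OF c(1)] yK] tp(1) by (rule mult_left_mono)
  have n2: "G * norm (y - mass_center L) \<le> G * mesh_size Msh"
    using cell_dist[OF mesh c(3) yL cen[OF c(3)]] tp(1) by (rule mult_left_mono)
  have "\<bar>\<psi> (mass_center K, t) - \<psi> (mass_center L, t)\<bar> \<le> \<bar>\<psi> (mass_center K, t) - \<psi> (y, t)\<bar> + \<bar>\<psi> (y, t) - \<psi> (mass_center L, t)\<bar>"
    using abs_triangle_ineq[of "\<psi> (mass_center K, t) - \<psi> (y, t)" "\<psi> (y, t) - \<psi> (mass_center L, t)"] by simp
  also have "\<dots> \<le> G * (2 * mesh_size Msh)" using d1 d2 n1 n2 by simp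
  finally show ?thesis unfolding K_def L_def G_def .
qed


lemma negnorm:
  assumes Mb: "Mb > 1"
    and bnds: "\<forall>n\<le>N. \<forall>K\<in>Msh. rho n K \<le> Mb \<and> 1 / rho n K \<le> Mb \<and> e n K \<le> Mb \<and> 1 / e n K \<le> Mb
             \<and> (\<forall>\<sigma>\<in>EK K. \<bar>u n K \<sigma>\<bar> \<le> Mb)"
  shows "neg_norm \<Omega> Msh T dt {1..N} (dR \<gamma> Msh E EK area rho rhof e ef u)
          \<le> ereal (3 * Mb *
              (max \<bar>deriv phi_rho (1 / Mb)\<bar> \<bar>deriv phi_rho Mb\<bar> * bv_norm Msh E EK area dt {0..N} rho
               + Mb * max \<bar>deriv (phi_e \<gamma>) (1 / Mb)\<bar> \<bar>deriv (phi_e \<gamma>) Mb\<bar> * bv_norm Msh E EK area dt {0..N} e)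
              * mesh_size Msh)"
proof -
  define Pr where "Pr = max \<bar>deriv phi_rho (1/Mb)\<bar> \<bar>deriv phi_rho Mb\<bar>"
  define Pe where "Pe = max \<bar>deriv (phi_e \<gamma>) (1/Mb)\<bar> \<bar>deriv (phi_e \<gamma>) Mb\<bar>"
  define I where "I = int_faces Msh EK E"
  define SC where "SC \<sigma> = some_cell Msh EK \<sigma>" for \<sigma>
  define NB where "NB \<sigma> = nb Msh EK (SC \<sigma>) \<sigma>" for \<sigma>
  define Q where "Q n \<sigma> = area \<sigma> * (Pr * \<bar>rho n (NB \<sigma>) - rho n (SC \<sigma>)\<bar> + Mb * Pe * \<bar>e n (NB \<sigma>) - e n (SC \<sigma>)\<bar>)" for n \<sigma>
  define h where "h = mesh_size Msh"
  define B where "B = Pr * bv_norm Msh E EK area dt {0..N} rho + Mb * Pe * bv_norm Msh E EK area dt {0..N} e"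
  have fI: "finite I" unfolding I_def using finite_subset[OF int_faces_sub mesh_D(5)[OF mesh]] .
  have h0: "0 \<le> h" unfolding h_def using mesh_size_nonneg[OF mesh] .
  have Pr0: "0 \<le> Pr" and Pe0: "0 \<le> Pe" unfolding Pr_def Pe_def by auto
  have Q0: "0 \<le> Q n \<sigma>" if "\<sigma> \<in> I" for n \<sigma>
  proof -
    have "\<sigma> \<in> E" using that int_faces_sub unfolding I_def by blast
    then have "area \<sigma> > 0" using area_pos by auto
    then show ?thesis unfolding Q_def using Pr0 Pe0 Mb by simp
  qed
  have bvsum: "(\<Sum>n\<in>{0..N}. dt * (\<Sum>\<sigma>\<in>I. Q n \<sigma>)) = B"
    unfolding B_def bv_norm_def Q_def I_def[symmetric] NB_def SC_def
    by (simp add: sum_distrib_left sum.distrib algebra_simps)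
  show ?thesis unfolding neg_norm_def Pr_def[symmetric] Pe_def[symmetric] B_def[symmetric] h_def[symmetric]
  proof (rule SUP_least)
    fix \<psi> assume "\<psi> \<in> {\<psi>. test_fun \<Omega> T \<psi> \<and> grad_sup \<Omega> T \<psi> \<noteq> 0}"
    then have tf: "test_fun \<Omega> T \<psi>" and Gn: "grad_sup \<Omega> T \<psi> \<noteq> 0" by auto
    define G where "G = grad_sup \<Omega> T \<psi>"
    have G0: "G > 0" using test_fun_props(1)[OF tf mesh_ne(3)[OF mesh] mesh_ne(2)[OF mesh] T_pos] Gn unfolding G_def by simp
    define W where "W n = (\<Sum>K\<in>Msh. measure lebesgue K * dR \<gamma> Msh E EK area rho rhof e ef u n K * \<psi> (mass_center K, real n * dt))" for n
    define f where "f n K \<sigma> = dR_flux \<gamma> Msh EK area rho rhof e ef u n K \<sigma>" for n K \<sigma>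
    have Wb: "W n \<le> 3 * Mb * h * G * (\<Sum>\<sigma>\<in>I. Q n \<sigma>)" if n: "n \<in> {1..N}" for n
    proof -
      define ps where "ps K = \<psi> (mass_center K, real n * dt)" for K
      have "W n = (\<Sum>K\<in>Msh. \<Sum>\<sigma>\<in>EK K \<inter> I. f n K \<sigma> * ps K)"
        unfolding W_def ps_def[symmetric]
      proof (rule sum.cong[OF refl])
        fix K assume K: "K \<in> Msh"
        have mK: "measure lebesgue K > 0" using cell_basic(7)[OF mesh K] .
        have "measure lebesgue K * dR \<gamma> Msh E EK area rho rhof e ef u n K = (\<Sum>\<sigma>\<in>EK K \<inter> I. f n K \<sigma>)"
          unfolding dR_def f_def I_def using mK by simp
        then show "measure lebesgue K * dR \<gamma> Msh E EK area rho rhof e ef u n K * ps K = (\<Sum>\<sigma>\<in>EK K \<inter> I. f n K \<sigma> * ps K)"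
          by (simp add: sum_distrib_right)
      qed
      also have "\<dots> = (\<Sum>\<sigma>\<in>I. f n (SC \<sigma>) \<sigma> * ps (SC \<sigma>) + f n (NB \<sigma>) \<sigma> * ps (NB \<sigma>))"
        unfolding I_def SC_def NB_def by (rule rearrange[OF mesh])
      also have "\<dots> \<le> (\<Sum>\<sigma>\<in>I. 3 * Mb * h * G * Q n \<sigma>)"
      proof (rule sum_mono)
        fix \<sigma> assume sI: "\<sigma> \<in> I"
        note c = int_face_cells[OF mesh sI[unfolded I_def], folded SC_def, folded NB_def]
        have nN: "n \<le> N" "1 \<le> n" using n by auto
        have fa: "f n (NB \<sigma>) \<sigma> = - f n (SC \<sigma>) \<sigma>" unfolding f_def by (rule cons[OF nN(1) c(1) c(3) c(4)[symmetric] c(2) c(5)])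
        have fb: "\<bar>f n (SC \<sigma>) \<sigma>\<bar> \<le> 3/2 * Mb * Q n \<sigma>"
          using flux_bound[OF nN(2) nN(1) Mb bnds sI[unfolded I_def]]
          unfolding f_def Q_def SC_def NB_def Pr_def Pe_def .
        have pb: "\<bar>ps (SC \<sigma>) - ps (NB \<sigma>)\<bar> \<le> G * (2 * h)"
          using psi_bound[OF tf sI[unfolded I_def], of "real n * dt"] dt_pos
          unfolding ps_def SC_def NB_def G_def h_def by simp
        have "f n (SC \<sigma>) \<sigma> * ps (SC \<sigma>) + f n (NB \<sigma>) \<sigma> * ps (NB \<sigma>) = f n (SC \<sigma>) \<sigma> * (ps (SC \<sigma>) - ps (NB \<sigma>))"
          unfolding fa by (simp add: algebra_simps)
        also have "\<dots> \<le> \<bar>f n (SC \<sigma>) \<sigma>\<bar> * \<bar>ps (SC \<sigma>) - ps (NB \<sigma>)\<bar>" by (metis abs_ge_self abs_mult)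
        also have "\<dots> \<le> (3/2 * Mb * Q n \<sigma>) * (G * (2 * h))"
          using fb pb by (intro mult_mono) (auto intro: order_trans[OF abs_ge_zero])
        also have "\<dots> = 3 * Mb * h * G * Q n \<sigma>" by (simp add: algebra_simps)
        finally show "f n (SC \<sigma>) \<sigma> * ps (SC \<sigma>) + f n (NB \<sigma>) \<sigma> * ps (NB \<sigma>) \<le> 3 * Mb * h * G * Q n \<sigma>" .
      qed
      also have "\<dots> = 3 * Mb * h * G * (\<Sum>\<sigma>\<in>I. Q n \<sigma>)" by (simp add: sum_distrib_left)
      finally show ?thesis .
    qed
    have c0: "0 \<le> 3 * Mb * h * G" using Mb h0 G0 by simp
    have "(\<Sum>n\<in>{1..N}. dt * W n) \<le> (\<Sum>n\<in>{1..N}. dt * (3 * Mb * h * G * (\<Sum>\<sigma>\<in>I. Q n \<sigma>)))"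
    proof (rule sum_mono)
      fix n assume n: "n \<in> {1..N}"
      show "dt * W n \<le> dt * (3 * Mb * h * G * (\<Sum>\<sigma>\<in>I. Q n \<sigma>))"
        by (rule mult_left_mono[OF Wb[OF n]]) (use dt_pos in simp)
    qed
    also have "\<dots> = 3 * Mb * h * G * (\<Sum>n\<in>{1..N}. dt * (\<Sum>\<sigma>\<in>I. Q n \<sigma>))"
      by (simp add: sum_distrib_left algebra_simps)
    also have "\<dots> \<le> 3 * Mb * h * G * (\<Sum>n\<in>{0..N}. dt * (\<Sum>\<sigma>\<in>I. Q n \<sigma>))"
    proof (rule mult_left_mono[OF _ c0])
      show "(\<Sum>n\<in>{1..N}. dt * (\<Sum>\<sigma>\<in>I. Q n \<sigma>)) \<le> (\<Sum>n\<in>{0..N}. dt * (\<Sum>\<sigma>\<in>I. Q n \<sigma>))"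
        by (rule sum_mono2) (use dt_pos Q0 in \<open>auto intro!: mult_nonneg_nonneg sum_nonneg\<close>)
    qed
    finally have S: "(\<Sum>n\<in>{1..N}. dt * W n) \<le> 3 * Mb * h * G * B" unfolding bvsum .
    have "(1 / G) * (\<Sum>n\<in>{1..N}. dt * W n) \<le> (1 / G) * (3 * Mb * h * G * B)"
      using S G0 by (intro mult_left_mono) auto
    also have "\<dots> = 3 * Mb * B * h" using G0 by (simp add: field_simps)
    finally have "(1 / G) * (\<Sum>n\<in>{1..N}. dt * W n) \<le> 3 * Mb * B * h" .
    then show "ereal ((1 / grad_sup \<Omega> T \<psi>) * (\<Sum>n\<in>{1..N}. dt *
            (\<Sum>K\<in>Msh. measure lebesgue K * dR \<gamma> Msh E EK area rho rhof e ef u n K * \<psi> (mass_center K, real n * dt))))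
          \<le> ereal (3 * Mb * B * h)"
      unfolding W_def G_def by simp
  qed
qed

end

theorem theorem2p9:
  fixes \<Omega> :: "'a::euclidean_space set" and Msh :: "'a set set" and E :: "'a set set"
    and EK :: "'a set \<Rightarrow> 'a set set" and area :: "'a set \<Rightarrow> real"
    and T \<gamma> :: real and N :: nat
    and rho e p rhof ef :: "nat \<Rightarrow> 'a set \<Rightarrow> real"
    and u :: "nat \<Rightarrow> 'a set \<Rightarrow> 'a set \<Rightarrow> real"
  defines "dt \<equiv> T / real N"
  assumes mesh: "polytopal_mesh \<Omega> Msh E EK"
    and area_pos: "\<forall>\<sigma>\<in>E. area \<sigma> > 0"
    and T_pos: "T > 0" and N_pos: "N \<ge> 1"
    and gamma: "\<gamma> > 1"
    and u_int: "\<forall>n\<le>N. \<forall>K\<in>Msh. \<forall>L\<in>Msh. \<forall>\<sigma>. K \<noteq> L \<and> \<sigma> \<in> EK K \<and> \<sigma> \<in> EK L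
                  \<longrightarrow> u n L \<sigma> = - u n K \<sigma>"
    and u_ext: "\<forall>n\<le>N. \<forall>K\<in>Msh. \<forall>\<sigma>\<in>EK K \<inter> ext_faces Msh EK E. u n K \<sigma> = 0"
    and pos: "\<forall>n\<le>N. \<forall>K\<in>Msh. rho n K > 0 \<and> e n K > 0 \<and> p n K > 0"
    and face_pos: "\<forall>n<N. \<forall>\<sigma>\<in>E. rhof (Suc n) \<sigma> > 0 \<and> ef (Suc n) \<sigma> > 0"
    and mass: "\<forall>n<N. \<forall>K\<in>Msh.
       measure lebesgue K / dt * (rho (Suc n) K - rho n K)
       + (\<Sum>\<sigma>\<in>EK K. area \<sigma> * rhof (Suc n) \<sigma> * u (Suc n) K \<sigma>) = 0"
    and energy: "\<forall>n<N. \<forall>K\<in>Msh.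
       measure lebesgue K / dt * (rho (Suc n) K * e (Suc n) K - rho n K * e n K)
       + (\<Sum>\<sigma>\<in>EK K. area \<sigma> * rhof (Suc n) \<sigma> * u (Suc n) K \<sigma> * ef (Suc n) \<sigma>)
       + p (Suc n) K * (\<Sum>\<sigma>\<in>EK K. area \<sigma> * u (Suc n) K \<sigma>) \<ge> 0"
    and eos: "\<forall>n<N. \<forall>K\<in>Msh. p (Suc n) K = (\<gamma> - 1) * rho (Suc n) K * e (Suc n) K"
    and upwind: "\<forall>n<N. \<forall>K\<in>Msh. \<forall>L\<in>Msh. \<forall>\<sigma>. K \<noteq> L \<and> \<sigma> \<in> EK K \<and> \<sigma> \<in> EK L \<longrightarrow>
       (if u (Suc n) K \<sigma> \<ge> 0 then
          between (rhof (Suc n) \<sigma>) (rho (Suc n) K) (xKL phi_rho (rho (Suc n) K) (rho (Suc n) L))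
          \<and> between (ef (Suc n) \<sigma>) (e (Suc n) K) (xKL (phi_e \<gamma>) (e (Suc n) K) (e (Suc n) L))
        else
          between (rhof (Suc n) \<sigma>) (rho (Suc n) L) (xKL phi_rho (rho (Suc n) K) (rho (Suc n) L))
          \<and> between (ef (Suc n) \<sigma>) (e (Suc n) L) (xKL (phi_e \<gamma>) (e (Suc n) K) (e (Suc n) L)))"
  shows
    "(\<forall>n<N. \<forall>K\<in>Msh.
        measure lebesgue K / dt * (eta \<gamma> (rho (Suc n) K) (e (Suc n) K) - eta \<gamma> (rho n K) (e n K))
        + (\<Sum>\<sigma>\<in>EK K. area \<sigma> * eta \<gamma> (rhof (Suc n) \<sigma>) (ef (Suc n) \<sigma>) * u (Suc n) K \<sigma>)
        + measure lebesgue K * dR \<gamma> Msh E EK area rho rhof e ef u (Suc n) K \<le> 0)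
   \<and> (\<forall>n<N. \<forall>K\<in>Msh. \<forall>L\<in>Msh. \<forall>\<sigma>. K \<noteq> L \<and> \<sigma> \<in> EK K \<and> \<sigma> \<in> EK L \<longrightarrow>
        dR_flux \<gamma> Msh EK area rho rhof e ef u (Suc n) L \<sigma>
          = - dR_flux \<gamma> Msh EK area rho rhof e ef u (Suc n) K \<sigma>)
   \<and> (\<forall>n<N. (\<Sum>K\<in>Msh. measure lebesgue K * eta \<gamma> (rho (Suc n) K) (e (Suc n) K))
             \<le> (\<Sum>K\<in>Msh. measure lebesgue K * eta \<gamma> (rho n K) (e n K)))
   \<and> (\<forall>Mb::real. Mb > 1 \<and>
        (\<forall>n\<le>N. \<forall>K\<in>Msh. rho n K \<le> Mb \<and> 1 / rho n K \<le> Mb \<and> e n K \<le> Mb \<and> 1 / e n K \<le> Mb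
             \<and> (\<forall>\<sigma>\<in>EK K. \<bar>u n K \<sigma>\<bar> \<le> Mb)) \<longrightarrow>
        neg_norm \<Omega> Msh T dt {1..N} (dR \<gamma> Msh E EK area rho rhof e ef u)
          \<le> ereal (3 * Mb *
              (max \<bar>deriv phi_rho (1 / Mb)\<bar> \<bar>deriv phi_rho Mb\<bar> * bv_norm Msh E EK area dt {0..N} rho
               + Mb * max \<bar>deriv (phi_e \<gamma>) (1 / Mb)\<bar> \<bar>deriv (phi_e \<gamma>) Mb\<bar> * bv_norm Msh E EK area dt {0..N} e)
              * mesh_size Msh))"
  proof -
  interpret S: scheme \<Omega> Msh E EK area T \<gamma> N rho e p rhof ef u dt
  proof
    show "dt = T / real N" unfolding dt_def ..
  qed (fact mesh area_pos T_pos N_pos gamma u_int u_ext pos face_pos mass energy eos upwind)+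
  have c1: "\<forall>n<N. \<forall>K\<in>Msh.
        measure lebesgue K / dt * (eta \<gamma> (rho (Suc n) K) (e (Suc n) K) - eta \<gamma> (rho n K) (e n K))
        + (\<Sum>\<sigma>\<in>EK K. area \<sigma> * eta \<gamma> (rhof (Suc n) \<sigma>) (ef (Suc n) \<sigma>) * u (Suc n) K \<sigma>)
        + measure lebesgue K * dR \<gamma> Msh E EK area rho rhof e ef u (Suc n) K \<le> 0"
    by (intro allI impI ballI) (rule S.local_entropy)
  have c2: "\<forall>n<N. \<forall>K\<in>Msh. \<forall>L\<in>Msh. \<forall>\<sigma>. K \<noteq> L \<and> \<sigma> \<in> EK K \<and> \<sigma> \<in> EK L \<longrightarrow>
        dR_flux \<gamma> Msh EK area rho rhof e ef u (Suc n) L \<sigma>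
          = - dR_flux \<gamma> Msh EK area rho rhof e ef u (Suc n) K \<sigma>"
  proof (intro allI impI ballI)
    fix n K L \<sigma> assume n: "n < N" and K: "K \<in> Msh" and L: "L \<in> Msh" and h: "K \<noteq> L \<and> \<sigma> \<in> EK K \<and> \<sigma> \<in> EK L"
    have "Suc n \<le> N" using n by simp
    then show "dR_flux \<gamma> Msh EK area rho rhof e ef u (Suc n) L \<sigma>
          = - dR_flux \<gamma> Msh EK area rho rhof e ef u (Suc n) K \<sigma>"
      using S.cons[OF _ K L] h by blast
  qed
  have c3: "\<forall>n<N. (\<Sum>K\<in>Msh. measure lebesgue K * eta \<gamma> (rho (Suc n) K) (e (Suc n) K))
             \<le> (\<Sum>K\<in>Msh. measure lebesgue K * eta \<gamma> (rho n K) (e n K))"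
    by (intro allI impI) (rule S.global_entropy)
  have c4: "\<forall>Mb::real. Mb > 1 \<and>
        (\<forall>n\<le>N. \<forall>K\<in>Msh. rho n K \<le> Mb \<and> 1 / rho n K \<le> Mb \<and> e n K \<le> Mb \<and> 1 / e n K \<le> Mb
             \<and> (\<forall>\<sigma>\<in>EK K. \<bar>u n K \<sigma>\<bar> \<le> Mb)) \<longrightarrow>
        neg_norm \<Omega> Msh T dt {1..N} (dR \<gamma> Msh E EK area rho rhof e ef u)
          \<le> ereal (3 * Mb *
              (max \<bar>deriv phi_rho (1 / Mb)\<bar> \<bar>deriv phi_rho Mb\<bar> * bv_norm Msh E EK area dt {0..N} rho
               + Mb * max \<bar>deriv (phi_e \<gamma>) (1 / Mb)\<bar> \<bar>deriv (phi_e \<gamma>) Mb\<bar> * bv_norm Msh E EK area dt {0..N} e)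
              * mesh_size Msh)"
  proof (intro allI impI)
    fix Mb :: real assume h: "Mb > 1 \<and>
        (\<forall>n\<le>N. \<forall>K\<in>Msh. rho n K \<le> Mb \<and> 1 / rho n K \<le> Mb \<and> e n K \<le> Mb \<and> 1 / e n K \<le> Mb
             \<and> (\<forall>\<sigma>\<in>EK K. \<bar>u n K \<sigma>\<bar> \<le> Mb))"
    show "neg_norm \<Omega> Msh T dt {1..N} (dR \<gamma> Msh E EK area rho rhof e ef u)
          \<le> ereal (3 * Mb *
              (max \<bar>deriv phi_rho (1 / Mb)\<bar> \<bar>deriv phi_rho Mb\<bar> * bv_norm Msh E EK area dt {0..N} rho
               + Mb * max \<bar>deriv (phi_e \<gamma>) (1 / Mb)\<bar> \<bar>deriv (phi_e \<gamma>) Mb\<bar> * bv_norm Msh E EK area dt {0..N} e)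
              * mesh_size Msh)"
      using S.negnorm[OF conjunct1[OF h] conjunct2[OF h]] .
  qed
  show ?thesis using c1 c2 c3 c4 by (intro conjI)
qed

end
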